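(* Let $\mathcal H_S=\mathbb C^2$, $\hat H_S=0$, $\hat V_S=\hat\sigma_z/2$, $\hat\rho_S$ any qubit density matrix, and $(\hat H_E,\hat V_E,\hat\rho_E)$ any finite-dimensional environment. Then $$e^{it\hat H_S}\mathrm{tr}_E\!\left(e^{-it\hat H_{SE}}\hat\rho_S\otimes\hat\rho_E e^{it\hat H_{SE}}\right)e^{-it\hat H_S}=\sum_{k=0}^\infty(-i)^k\int_0^t\!dt_1\cdots\int_0^{t_{k-1}}\!dt_k\,F^{(k)}(\mathbf t)\,\mathscr V_S(t_1)\circ\cdots\circ\mathscr V_S(t_k)\hat\rho_S,$$ with $$F^{(k)}(\mathbf t)=\sum_{\boldsymbol\xi,\boldsymbol\eta\in\Omega_{\hat V}^{\times k}}\delta_{\xi_1,\eta_1}\Big(\prod_{l=1}^k\frac{\xi_l+\eta_l}{2}\Big)q_E^{(k)}(\boldsymbol\xi\boldsymbol\eta\mathbf t)=\sum_{\boldsymbol\phi\in\Omega_{\{V\}}^{\times k}}\Big(\prod_{l=1}^k\phi_l\Big)f^{(k)}(\boldsymbol\phi\mathbf t),$$ where $f^{(k)}(\boldsymbol\phi\mathbf t)=\big(\prod_{l=1}^k\sum_{\xi_l,\eta_l:\,2\phi_l=\xi_l+\eta_l}\big)\delta_{\xi_1,\eta_1}q_E^{(k)}(\boldsymbol\xi\boldsymbol\eta\mathbf t)$. Moreover the family $\{f^{(k)}\}_{k\ge1}$ satisfies the Chapman–Kolmogorov consistency criterion (summing $f^{(k)}$ over $\phi_l$ gives $f^{(k-1)}$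 with the $l$-th argument removed).
   Context: $\hbar=1$; $\hat\sigma_z=|+\rangle\langle+|-|-\rangle\langle-|$; $\hat H_{SE}=\hat H_S\otimes\hat{\mathds1}+\hat V_S\otimes\hat V_E+\hat{\mathds1}\otimes\hat H_E$. $\mathscr V_S(t)\hat A=\hat V_S(t)\hat A-\hat A\hat V_S(t)$, $\hat V_S(t)=e^{it\hat H_S}\hat V_Se^{-it\hat H_S}$; $k=0$ term is $\hat\rho_S$ (with $F^{(0)}=1$). $\hat V_E=\sum_nv_n|n\rangle\langle n|$, $\Omega_{\hat V}$ its distinct eigenvalues, $\Omega_{\{V\}}=\{(\xi+\eta)/2:\xi,\eta\in\Omega_{\hat V}\}$. $\hat\rho_E(t)=e^{-it\hat H_E}\hat\rho_Ee^{it\hat H_E}$; $T_t(nm|n'm')=\langle n|e^{-it\hat H_E}|n'\rangle\overline{\langle m|e^{-it\hat H_E}|m'\rangle}$; for $t_1>\dots>t_k\ge0$, $$q_E^{(k)}(\boldsymbol\xi\boldsymbol\eta\mathbf t)=\Big(\prod_{l=1}^k\sum_{n_l:\,v_{n_l}=\xi_l}\ \sum_{m_l:\,v_{m_l}=\eta_l}\Big)\delta_{n_1,m_1}\langle n_k|\hat\rho_E(t_k)|m_k\rangle\prod_{l=1}^{k-1}T_{t_l-t_{l+1}}(n_lm_l|n_{l+1}m_{l+1}).$$ *)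

theory Defs
  imports "HOL-Analysis.Analysis"
begin

text \<open>Finite-dimensional operators are represented as complex matrices indexed by a
finite type: an operator on C^'a is a function 'a => 'a => complex (entry (i,j) = <i|A|j>).
The qubit is indexed by bool, with True standing for |+> and False for |->.\<close>

type_synonym 'a cmat = "'a \<Rightarrow> 'a \<Rightarrow> complex"

definition mmult :: "'a::finite cmat \<Rightarrow> 'a cmat \<Rightarrow> 'a cmat" where
  "mmult A B = (\<lambda>i j. \<Sum>k\<in>UNIV. A i k * B k j)"

definition mid :: "'a cmat" where
  "mid = (\<lambda>i j. if i = j then 1 else 0)"

definition msmult :: "complex \<Rightarrow> 'a cmat \<Rightarrow> 'a cmat" where
  "msmult c A = (\<lambda>i j. c * A i j)"

definition madd :: "'a cmat \<Rightarrow> 'a cmat \<Rightarrow> 'a cmat" where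
  "madd A B = (\<lambda>i j. A i j + B i j)"

definition mminus :: "'a cmat \<Rightarrow> 'a cmat \<Rightarrow> 'a cmat" where
  "mminus A B = (\<lambda>i j. A i j - B i j)"

fun mpow :: "'a::finite cmat \<Rightarrow> nat \<Rightarrow> 'a cmat" where
  "mpow A 0 = mid"
| "mpow A (Suc n) = mmult A (mpow A n)"

definition mexp :: "'a::finite cmat \<Rightarrow> 'a cmat" where
  "mexp A = (\<lambda>i j. \<Sum>n. mpow A n i j / of_nat (fact n))"

definition tensor :: "'a cmat \<Rightarrow> 'b cmat \<Rightarrow> ('a \<times> 'b) cmat" where
  "tensor A B = (\<lambda>(a, n) (b, m). A a b * B n m)"

definition ptrace_E :: "('a \<times> 'b::finite) cmat \<Rightarrow> 'a cmat" where
  "ptrace_E M = (\<lambda>a b. \<Sum>n\<in>UNIV. M (a, n) (b, n))"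

definition hermitian :: "'a cmat \<Rightarrow> bool" where
  "hermitian A \<longleftrightarrow> (\<forall>i j. A j i = cnj (A i j))"

definition density_matrix :: "'a::finite cmat \<Rightarrow> bool" where
  "density_matrix A \<longleftrightarrow> hermitian A
     \<and> (\<forall>x::'a \<Rightarrow> complex. 0 \<le> Re (\<Sum>i\<in>UNIV. \<Sum>j\<in>UNIV. cnj (x i) * A i j * x j))
     \<and> (\<Sum>i\<in>UNIV. A i i) = 1"

definition sigma_z :: "bool cmat" where
  "sigma_z = (\<lambda>a b. if a = b then (if a then 1 else -1) else 0)"

definition diag_op :: "('e \<Rightarrow> real) \<Rightarrow> 'e cmat" where
  "diag_op v = (\<lambda>n m. if n = m then complex_of_real (v n) else 0)"

definition H_SE :: "'s cmat \<Rightarrow> 's cmat \<Rightarrow> 'e cmat \<Rightarrow> 'e cmat \<Rightarrow> ('s \<times> 'e) cmat" where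
  "H_SE HS VS VE HE = madd (madd (tensor HS mid) (tensor VS VE)) (tensor mid HE)"

definition reduced_interaction_state ::
  "'s::finite cmat \<Rightarrow> 's cmat \<Rightarrow> 'e::finite cmat \<Rightarrow> 'e cmat \<Rightarrow> 's cmat \<Rightarrow> 'e cmat \<Rightarrow> real \<Rightarrow> 's cmat" where
  "reduced_interaction_state HS VS VE HE rhoS rhoE t =
     (let H = H_SE HS VS VE HE in
      mmult (mmult (mexp (msmult (\<i> * of_real t) HS))
         (ptrace_E (mmult (mmult (mexp (msmult (- \<i> * of_real t) H)) (tensor rhoS rhoE))
                          (mexp (msmult (\<i> * of_real t) H)))))
        (mexp (msmult (- \<i> * of_real t) HS)))"

definition VS_t :: "'s::finite cmat \<Rightarrow> 's cmat \<Rightarrow> real \<Rightarrow> 's cmat" where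
  "VS_t HS VS s = mmult (mmult (mexp (msmult (\<i> * of_real s) HS)) VS) (mexp (msmult (- \<i> * of_real s) HS))"

definition calV :: "'s::finite cmat \<Rightarrow> 's cmat \<Rightarrow> real \<Rightarrow> 's cmat \<Rightarrow> 's cmat" where
  "calV HS VS s A = mminus (mmult (VS_t HS VS s) A) (mmult A (VS_t HS VS s))"

text \<open>vcomp k tau A = calV(tau 1) o calV(tau 2) o ... o calV(tau k) A.\<close>
fun vcomp :: "'s::finite cmat \<Rightarrow> 's cmat \<Rightarrow> nat \<Rightarrow> (nat \<Rightarrow> real) \<Rightarrow> 's cmat \<Rightarrow> 's cmat" where
  "vcomp HS VS 0 tau A = A"
| "vcomp HS VS (Suc k) tau A = vcomp HS VS k tau (calV HS VS (tau (Suc k)) A)"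

text \<open>The full integral int_0^t dt_1 ... int_0^{t_{k-1}} dt_k g(t_1,...,t_k) is nint k 1 t (\<lambda>_. 0) g.\<close>
fun nint :: "nat \<Rightarrow> nat \<Rightarrow> real \<Rightarrow> (nat \<Rightarrow> real) \<Rightarrow> ((nat \<Rightarrow> real) \<Rightarrow> complex) \<Rightarrow> complex" where
  "nint 0 j s tau g = g tau"
| "nint (Suc r) j s tau g = integral {0..s} (\<lambda>u. nint r (Suc j) u (tau(j := u)) g)"

definition U_E :: "'e::finite cmat \<Rightarrow> real \<Rightarrow> 'e cmat" where
  "U_E HE s = mexp (msmult (- \<i> * of_real s) HE)"

definition rhoE_t :: "'e::finite cmat \<Rightarrow> 'e cmat \<Rightarrow> real \<Rightarrow> 'e cmat" where
  "rhoE_t HE rhoE s = mmult (mmult (U_E HE s) rhoE) (mexp (msmult (\<i> * of_real s) HE))"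

definition T_E :: "'e::finite cmat \<Rightarrow> real \<Rightarrow> 'e \<Rightarrow> 'e \<Rightarrow> 'e \<Rightarrow> 'e \<Rightarrow> complex" where
  "T_E HE s n m n' m' = U_E HE s n n' * cnj (U_E HE s m m')"

definition Omega_V :: "('e \<Rightarrow> real) \<Rightarrow> real set" where
  "Omega_V v = range v"

definition Omega_VV :: "('e \<Rightarrow> real) \<Rightarrow> real set" where
  "Omega_VV v = {(x + y) / 2 | x y. x \<in> Omega_V v \<and> y \<in> Omega_V v}"

text \<open>Tuples (indexed by 1..k) are functions nat => _ restricted to {1..k}.\<close>
definition ktuples :: "nat \<Rightarrow> 'a set \<Rightarrow> (nat \<Rightarrow> 'a) set" where
  "ktuples k A = PiE {1..k} (\<lambda>_. A)"

definition fibre_idx :: "('e \<Rightarrow> real) \<Rightarrow> nat \<Rightarrow> (nat \<Rightarrow> real) \<Rightarrow> (nat \<Rightarrow> 'e) set" where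
  "fibre_idx v k xi = {n \<in> ktuples k UNIV. \<forall>l\<in>{1..k}. v (n l) = xi l}"

definition q_E :: "'e::finite cmat \<Rightarrow> ('e \<Rightarrow> real) \<Rightarrow> 'e cmat \<Rightarrow> nat \<Rightarrow>
    (nat \<Rightarrow> real) \<Rightarrow> (nat \<Rightarrow> real) \<Rightarrow> (nat \<Rightarrow> real) \<Rightarrow> complex" where
  "q_E HE v rhoE k xi eta tau =
     (\<Sum>n\<in>fibre_idx v k xi. \<Sum>m\<in>fibre_idx v k eta.
        (if n 1 = m 1 then 1 else 0) * rhoE_t HE rhoE (tau k) (n k) (m k)
        * (\<Prod>l\<in>{1..<k}. T_E HE (tau l - tau (Suc l)) (n l) (m l) (n (Suc l)) (m (Suc l))))"

fun F_k :: "'e::finite cmat \<Rightarrow> ('e \<Rightarrow> real) \<Rightarrow> 'e cmat \<Rightarrow> nat \<Rightarrow> (nat \<Rightarrow> real) \<Rightarrow> complex" where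
  "F_k HE v rhoE 0 tau = 1"
| "F_k HE v rhoE (Suc k) tau =
     (\<Sum>xi\<in>ktuples (Suc k) (Omega_V v). \<Sum>eta\<in>ktuples (Suc k) (Omega_V v).
        (if xi 1 = eta 1 then 1 else 0)
        * complex_of_real (\<Prod>l\<in>{1..Suc k}. (xi l + eta l) / 2)
        * q_E HE v rhoE (Suc k) xi eta tau)"

definition f_k :: "'e::finite cmat \<Rightarrow> ('e \<Rightarrow> real) \<Rightarrow> 'e cmat \<Rightarrow> nat \<Rightarrow> (nat \<Rightarrow> real) \<Rightarrow> (nat \<Rightarrow> real) \<Rightarrow> complex" where
  "f_k HE v rhoE k phi tau =
     (\<Sum>(xi, eta)\<in>{(xi, eta) \<in> ktuples k (Omega_V v) \<times> ktuples k (Omega_V v).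
                      \<forall>l\<in>{1..k}. 2 * phi l = xi l + eta l}.
        (if xi 1 = eta 1 then 1 else 0) * q_E HE v rhoE k xi eta tau)"

definition time_ordered :: "nat \<Rightarrow> (nat \<Rightarrow> real) \<Rightarrow> bool" where
  "time_ordered k tau \<longleftrightarrow> (\<forall>l\<in>{1..<k}. tau (Suc l) < tau l) \<and> 0 \<le> tau k"

definition skip_idx :: "nat \<Rightarrow> (nat \<Rightarrow> 'a) \<Rightarrow> nat \<Rightarrow> 'a" where
  "skip_idx l g = (\<lambda>i. if i < l then g i else g (Suc i))"

end

theory Submission
  imports Defs
begin

typedef 'n sqm = "UNIV :: ('n \<Rightarrow> 'n \<Rightarrow> complex) set" morphisms ent Mk by auto

setup_lifting type_definition_sqm

lemma sqm_eqI: "(\<And>i j. ent x i j = ent y i j) \<Longrightarrow> x = y"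
  by (metis ent_inject ext)

lemma mmult_assoc: "mmult (mmult A B) C = mmult A (mmult (B::'a::finite cmat) C)"
  unfolding mmult_def
  by (auto simp: sum_distrib_left sum_distrib_right mult.assoc intro!: ext sum.swap[THEN trans])

lemma mmult_mid_left[simp]: "mmult mid A = (A::'a::finite cmat)"
  unfolding mmult_def mid_def by (simp add: fun_eq_iff if_distrib[of "\<lambda>x. x * _"] cong: if_cong)
lemma mmult_mid_right[simp]: "mmult A mid = (A::'a::finite cmat)"
  unfolding mmult_def mid_def by (simp add: fun_eq_iff if_distrib[of "\<lambda>x. _ * x"] cong: if_cong)

instantiation sqm :: (finite) ring_1
begin
lift_definition zero_sqm :: "'a sqm" is "\<lambda>i j. 0" .
lift_definition one_sqm :: "'a sqm" is "mid" .
lift_definition plus_sqm :: "'a sqm \<Rightarrow> 'a sqm \<Rightarrow> 'a sqm" is madd .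
lift_definition minus_sqm :: "'a sqm \<Rightarrow> 'a sqm \<Rightarrow> 'a sqm" is mminus .
lift_definition uminus_sqm :: "'a sqm \<Rightarrow> 'a sqm" is "\<lambda>A i j. - A i j" .
lift_definition times_sqm :: "'a sqm \<Rightarrow> 'a sqm \<Rightarrow> 'a sqm" is mmult .
instance
proof
  fix a b c :: "'a sqm"
  show "a * b * c = a * (b * c)"
    by transfer (rule mmult_assoc)
  show "a + b + c = a + (b + c)" by transfer (simp add: madd_def algebra_simps)
  show "a + b = b + a" by transfer (simp add: madd_def add.commute)
  show "0 + a = a" by transfer (simp add: madd_def algebra_simps)
  show "- a + a = 0" by transfer (simp add: madd_def algebra_simps)
  show "a - b = a + - b" by transfer (simp add: madd_def mminus_def)
  show "1 * a = a" by transfer simp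
  show "a * 1 = a" by transfer simp
  show "(a + b) * c = a * c + b * c" by transfer (simp add: mmult_def madd_def distrib_right sum.distrib)
  show "a * (b + c) = a * b + a * c" by transfer (simp add: mmult_def madd_def distrib_left sum.distrib)
  show "(0::'a sqm) \<noteq> 1" by transfer (auto simp: mid_def fun_eq_iff)
qed
end

definition colsum :: "'a::finite cmat \<Rightarrow> 'a \<Rightarrow> real" where
  "colsum A j = (\<Sum>i\<in>UNIV. cmod (A i j))"

definition mnorm :: "'a::finite cmat \<Rightarrow> real" where
  "mnorm A = Max (range (colsum A))"

lemma colsum_le_mnorm: "colsum A j \<le> mnorm A"
  unfolding mnorm_def by (rule Max_ge) auto

lemma mnorm_attained: "\<exists>j. mnorm A = colsum A j"
proof -
  have "mnorm A \<in> range (colsum A)" unfolding mnorm_def by (rule Max_in) auto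
  then show ?thesis by auto
qed

lemma mnorm_le: "(\<And>j. colsum A j \<le> c) \<Longrightarrow> mnorm A \<le> c"
  using mnorm_attained by metis

lemma colsum_nonneg: "0 \<le> colsum A j"
  unfolding colsum_def by (simp add: sum_nonneg)

lemma mnorm_nonneg: "0 \<le> mnorm A"
  using colsum_le_mnorm[of A] colsum_nonneg[of A] by (meson order_trans)

lemma entry_le_colsum: "cmod (A i j) \<le> colsum A j"
  unfolding colsum_def by (rule member_le_sum) auto

lemma entry_le_mnorm: "cmod (A i j) \<le> mnorm A"
  using entry_le_colsum colsum_le_mnorm order_trans by metis

lemma mnorm_le_sum: "mnorm A \<le> (\<Sum>i\<in>UNIV. \<Sum>j\<in>UNIV. cmod (A i j))"
proof (rule mnorm_le)
  fix j
  show "colsum A j \<le> (\<Sum>i\<in>UNIV. \<Sum>j\<in>UNIV. cmod (A i j))"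
    unfolding colsum_def by (intro sum_mono member_le_sum) auto
qed

lemma mnorm_zero_iff: "mnorm A = 0 \<longleftrightarrow> A = (\<lambda>i j. 0)"
proof
  assume "mnorm A = 0"
  then have "cmod (A i j) \<le> 0" for i j using entry_le_mnorm[of A i j] by simp
  then show "A = (\<lambda>i j. 0)" by (auto simp: fun_eq_iff)
next
  assume "A = (\<lambda>i j. 0)"
  then show "mnorm A = 0" unfolding mnorm_def colsum_def by simp
qed

lemma mnorm_triangle: "mnorm (madd A B) \<le> mnorm A + mnorm B"
proof (rule mnorm_le)
  fix j
  have "colsum (madd A B) j \<le> colsum A j + colsum B j"
    unfolding colsum_def madd_def sum.distrib[symmetric] by (intro sum_mono norm_triangle_ineq)
  also have "\<dots> \<le> mnorm A + mnorm B" by (intro add_mono colsum_le_mnorm)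
  finally show "colsum (madd A B) j \<le> mnorm A + mnorm B" .
qed

lemma mnorm_scale: "mnorm (\<lambda>i j. r *\<^sub>R A i j) = \<bar>r\<bar> * mnorm A"
proof -
  have cs: "colsum (\<lambda>i j. r *\<^sub>R A i j) j = \<bar>r\<bar> * colsum A j" for j
    unfolding colsum_def by (simp add: sum_distrib_left)
  show ?thesis
  proof (rule antisym)
    show "mnorm (\<lambda>i j. r *\<^sub>R A i j) \<le> \<bar>r\<bar> * mnorm A"
      by (rule mnorm_le) (simp add: cs colsum_le_mnorm mult_left_mono)
    obtain j where "mnorm A = colsum A j" using mnorm_attained by blast
    then show "\<bar>r\<bar> * mnorm A \<le> mnorm (\<lambda>i j. r *\<^sub>R A i j)"
      using colsum_le_mnorm[of "\<lambda>i j. r *\<^sub>R A i j" j] by (simp add: cs)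
  qed
qed

lemma mnorm_mult: "mnorm (mmult A B) \<le> mnorm A * mnorm B"
proof (rule mnorm_le)
  fix j
  have "colsum (mmult A B) j \<le> (\<Sum>i\<in>UNIV. \<Sum>k\<in>UNIV. cmod (A i k) * cmod (B k j))"
    unfolding colsum_def mmult_def
    by (intro sum_mono order_trans[OF norm_sum]) (simp add: norm_mult)
  also have "\<dots> = (\<Sum>k\<in>UNIV. colsum A k * cmod (B k j))"
    unfolding colsum_def by (subst sum.swap) (simp add: sum_distrib_right)
  also have "\<dots> \<le> (\<Sum>k\<in>UNIV. mnorm A * cmod (B k j))"
    by (intro sum_mono mult_right_mono colsum_le_mnorm) auto
  also have "\<dots> = mnorm A * colsum B j"
    unfolding colsum_def by (simp add: sum_distrib_left)
  also have "\<dots> \<le> mnorm A * mnorm B"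
    by (intro mult_left_mono colsum_le_mnorm mnorm_nonneg)
  finally show "colsum (mmult A B) j \<le> mnorm A * mnorm B" .
qed

lemma mnorm_mid: "mnorm (mid :: 'a::finite cmat) = 1"
proof -
  have "colsum (mid :: 'a cmat) j = 1" for j
    unfolding colsum_def mid_def by (simp add: if_distrib[of cmod] cong: if_cong)
  then show ?thesis unfolding mnorm_def by simp
qed

instantiation sqm :: (finite) real_algebra_1
begin
lift_definition scaleR_sqm :: "real \<Rightarrow> 'a sqm \<Rightarrow> 'a sqm" is "\<lambda>r A i j. r *\<^sub>R A i j" .
instance
proof
  fix a b :: real and x y :: "'a sqm"
  show "a *\<^sub>R (x + y) = a *\<^sub>R x + a *\<^sub>R y" by transfer (simp add: madd_def algebra_simps)
  show "(a + b) *\<^sub>R x = a *\<^sub>R x + b *\<^sub>R x" by transfer (simp add: madd_def algebra_simps)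
  show "a *\<^sub>R b *\<^sub>R x = (a * b) *\<^sub>R x" by transfer simp
  show "1 *\<^sub>R x = x" by transfer simp
  show "a *\<^sub>R x * y = a *\<^sub>R (x * y)" by transfer (simp add: mmult_def scaleR_sum_right)
  show "x * a *\<^sub>R y = a *\<^sub>R (x * y)" by transfer (simp add: mmult_def scaleR_sum_right)
qed
end

instantiation sqm :: (finite) real_normed_algebra_1
begin
lift_definition norm_sqm :: "'a sqm \<Rightarrow> real" is mnorm .
definition sgn_sqm :: "'a sqm \<Rightarrow> 'a sqm" where "sgn_sqm x = x /\<^sub>R norm x"
definition dist_sqm :: "'a sqm \<Rightarrow> 'a sqm \<Rightarrow> real" where "dist_sqm x y = norm (x - y)"
definition uniformity_sqm :: "('a sqm \<times> 'a sqm) filter" where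
  "uniformity_sqm = (INF e\<in>{0 <..}. principal {(x, y). dist x y < e})"
definition open_sqm :: "'a sqm set \<Rightarrow> bool" where
  "open_sqm U \<longleftrightarrow> (\<forall>x\<in>U. eventually (\<lambda>(x', y). x' = x \<longrightarrow> y \<in> U) uniformity)"
instance
proof
  fix a b :: real and x y :: "'a sqm"
  show "sgn x = x /\<^sub>R norm x" by (rule sgn_sqm_def)
  show "dist x y = norm (x - y)" by (rule dist_sqm_def)
  show "(uniformity :: ('a sqm \<times> 'a sqm) filter) = (INF e\<in>{0 <..}. principal {(x, y). dist x y < e})"
    by (rule uniformity_sqm_def)
  show "norm x = 0 \<longleftrightarrow> x = 0" by transfer (rule mnorm_zero_iff)
  show "norm (x + y) \<le> norm x + norm y" by transfer (rule mnorm_triangle)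
  show "norm (a *\<^sub>R x) = \<bar>a\<bar> * norm x" by transfer (rule mnorm_scale)
  show "norm (x * y) \<le> norm x * norm y" by transfer (rule mnorm_mult)
  show "norm (1 :: 'a sqm) = 1" by transfer (rule mnorm_mid)
qed (rule open_sqm_def)
end

lemma norm_ent_le: "cmod (ent x i j) \<le> norm x"
  by transfer (rule entry_le_mnorm)

lemma norm_le_ent_sum: "norm x \<le> (\<Sum>i\<in>UNIV. \<Sum>j\<in>UNIV. cmod (ent x i j))"
  by transfer (rule mnorm_le_sum)

lemma ent_add[simp]: "ent (x + y) i j = ent x i j + ent y i j" by transfer (simp add: madd_def)
lemma ent_diff[simp]: "ent (x - y) i j = ent x i j - ent y i j" by transfer (simp add: mminus_def)
lemma ent_uminus[simp]: "ent (- x) i j = - ent x i j" by transfer simp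
lemma ent_zero[simp]: "ent 0 i j = 0" by transfer simp
lemma ent_scaleR[simp]: "ent (r *\<^sub>R x) i j = r *\<^sub>R ent x i j" by transfer simp
lemma ent_mult: "ent (x * y) = mmult (ent x) (ent y)" by transfer simp
lemma ent_one: "ent 1 = mid" by transfer simp

instance sqm :: (finite) banach
proof
  fix X :: "nat \<Rightarrow> 'a sqm"
  assume X: "Cauchy X"
  have "Cauchy (\<lambda>n. ent (X n) i j)" for i j
  proof (rule CauchyI)
    fix e :: real assume "0 < e"
    then obtain M where M: "\<forall>m\<ge>M. \<forall>n\<ge>M. norm (X m - X n) < e" using X CauchyD by blast
    show "\<exists>M. \<forall>m\<ge>M. \<forall>n\<ge>M. norm (ent (X m) i j - ent (X n) i j) < e"
      using M norm_ent_le[of "X _ - X _" i j] by (metis ent_diff order_le_less_trans)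
  qed
  then have "\<And>i j. convergent (\<lambda>n. ent (X n) i j)" using Cauchy_convergent by blast
  then have L: "\<And>i j. (\<lambda>n. ent (X n) i j) \<longlonglongrightarrow> lim (\<lambda>n. ent (X n) i j)"
    using convergent_LIMSEQ_iff by blast
  define Y where "Y = Mk (\<lambda>i j. lim (\<lambda>n. ent (X n) i j))"
  have E: "(\<lambda>n. cmod (ent (X n - Y) i j)) \<longlonglongrightarrow> 0" for i j
  proof -
    have "(\<lambda>n. ent (X n) i j - lim (\<lambda>n. ent (X n) i j)) \<longlonglongrightarrow> 0"
      using L by (rule LIM_zero)
    moreover have "ent (X n - Y) i j = ent (X n) i j - lim (\<lambda>n. ent (X n) i j)" for n
      unfolding Y_def by (simp add: Mk_inverse)
    ultimately show ?thesis by (simp only: tendsto_norm_zero_iff)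
  qed
  have "(\<lambda>n. \<Sum>i\<in>UNIV. \<Sum>j\<in>UNIV. cmod (ent (X n - Y) i j)) \<longlonglongrightarrow> (\<Sum>i\<in>(UNIV::'a set). \<Sum>j\<in>(UNIV::'a set). 0)"
    by (intro tendsto_sum E)
  then have S0: "(\<lambda>n. \<Sum>i\<in>UNIV. \<Sum>j\<in>UNIV. cmod (ent (X n - Y) i j)) \<longlonglongrightarrow> 0" by simp
  have "(\<lambda>n. X n - Y) \<longlonglongrightarrow> 0"
    apply (rule Lim_null_comparison[where g="\<lambda>n. \<Sum>i\<in>UNIV. \<Sum>j\<in>UNIV. cmod (ent (X n - Y) i j)"])
     apply (rule always_eventually)
     apply (rule allI)
     apply (rule norm_le_ent_sum)
    by (rule S0)
  then have "X \<longlonglongrightarrow> Y" by (simp only: LIM_zero_iff)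
  then show "convergent X" by (rule convergentI)
qed


definition bt :: "'a::{real_normed_algebra_1,banach} \<Rightarrow> 'a \<Rightarrow> real \<Rightarrow> 'a" where
  "bt a b s = exp (s *\<^sub>R (-a)) * b * exp (s *\<^sub>R a)"

fun Iseq :: "'a::{real_normed_algebra_1,banach} \<Rightarrow> 'a \<Rightarrow> nat \<Rightarrow> real \<Rightarrow> 'a" where
  "Iseq a b 0 t = 1"
| "Iseq a b (Suc k) t = integral {0..t} (\<lambda>s. bt a b s * Iseq a b k s)"

definition Wd :: "'a::{real_normed_algebra_1,banach} \<Rightarrow> 'a \<Rightarrow> real \<Rightarrow> 'a" where
  "Wd a b t = exp (t *\<^sub>R (-a)) * exp (t *\<^sub>R (a + b))"

lemma cont_exp_scale: "continuous_on S (\<lambda>s::real. exp (s *\<^sub>R (A::'a::{real_normed_algebra_1,banach})))"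
proof -
  have "continuous (at x within S) (\<lambda>s::real. exp (s *\<^sub>R A))" for x
    by (rule has_vector_derivative_continuous[OF exp_scaleR_has_vector_derivative_right])
  then show ?thesis using continuous_on_eq_continuous_within by blast
qed

lemma cont_bt: "continuous_on S (bt a b)"
  unfolding bt_def by (intro continuous_on_mult cont_exp_scale continuous_on_const)

lemma cont_Wd: "continuous_on S (Wd a b)"
  unfolding Wd_def by (intro continuous_on_mult cont_exp_scale)

lemma cont_Iseq: "continuous_on {0..T} (Iseq a b k)"
proof (induction k)
  case 0
  then show ?case by (simp add: continuous_on_const)
next
  case (Suc k)
  have g: "continuous_on {0..T} (\<lambda>s. bt a b s * Iseq a b k s)"
    by (intro continuous_on_mult cont_bt Suc)
  have "continuous (at x within {0..T}) (\<lambda>t. integral {0..t} (\<lambda>s. bt a b s * Iseq a b k s))"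
    if "x \<in> {0..T}" for x
    by (rule has_vector_derivative_continuous[OF integral_has_vector_derivative[OF g that]])
  then show ?case by (simp add: continuous_on_eq_continuous_within)
qed

lemma exp_scale_inv: "exp (t *\<^sub>R A) * exp (t *\<^sub>R (-A)) = (1::'a::{real_normed_algebra_1,banach})"
proof -
  have "exp (t *\<^sub>R A + t *\<^sub>R (-A)) = exp (t *\<^sub>R A) * exp (t *\<^sub>R (-A))"
    by (rule exp_add_commuting) (simp add: algebra_simps)
  then show ?thesis by simp
qed

lemma Wd_deriv: "(Wd a b has_vector_derivative (bt a b t * Wd a b t)) (at t within S)"
proof -
  have "(Wd a b has_vector_derivative
     (exp (t *\<^sub>R (-a)) * ((a + b) * exp (t *\<^sub>R (a + b))) + exp (t *\<^sub>R (-a)) * (-a) * exp (t *\<^sub>R (a + b))))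
     (at t within S)"
    unfolding Wd_def
    by (intro has_vector_derivative_mult exp_scaleR_has_vector_derivative_right
        has_vector_derivative_at_within[OF exp_scaleR_has_vector_derivative_left])
  moreover have "exp (t *\<^sub>R (-a)) * ((a + b) * exp (t *\<^sub>R (a + b))) + exp (t *\<^sub>R (-a)) * (-a) * exp (t *\<^sub>R (a + b))
      = exp (t *\<^sub>R (-a)) * b * exp (t *\<^sub>R (a + b))"
    by (simp add: algebra_simps)
  moreover have "bt a b t * Wd a b t = exp (t *\<^sub>R (-a)) * b * exp (t *\<^sub>R (a + b))"
  proof -
    have "bt a b t * Wd a b t = exp (t *\<^sub>R (-a)) * b * (exp (t *\<^sub>R a) * exp (t *\<^sub>R (-a))) * exp (t *\<^sub>R (a + b))"
      unfolding bt_def Wd_def by (simp only: mult.assoc)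
    then show ?thesis by (simp only: exp_scale_inv mult_1_right)
  qed
  ultimately show ?thesis by simp
qed

lemma Wd_integral:
  assumes "0 \<le> t"
  shows "((\<lambda>s. bt a b s * Wd a b s) has_integral (Wd a b t - 1)) {0..t}"
proof -
  have "((\<lambda>s. bt a b s * Wd a b s) has_integral (Wd a b t - Wd a b 0)) {0..t}"
    by (rule fundamental_theorem_of_calculus[OF assms]) (rule Wd_deriv)
  then show ?thesis by (simp add: Wd_def)
qed

definition Ed :: "'a::{real_normed_algebra_1,banach} \<Rightarrow> 'a \<Rightarrow> nat \<Rightarrow> real \<Rightarrow> 'a" where
  "Ed a b n t = Wd a b t - (\<Sum>k<n. Iseq a b k t)"

lemma cont_Ed: "continuous_on {0..T} (Ed a b n)"
  unfolding Ed_def by (intro continuous_on_diff cont_Wd continuous_on_sum cont_Iseq)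

lemma integrable_prod:
  assumes "continuous_on {0..t} f"
  shows "(\<lambda>s. bt a b s * f s) integrable_on {0..t}"
  by (intro integrable_continuous_interval continuous_on_mult cont_bt assms)

lemma Ed_rec:
  assumes "0 \<le> t"
  shows "Ed a b (Suc n) t = integral {0..t} (\<lambda>s. bt a b s * Ed a b n s)"
proof -
  have "integral {0..t} (\<lambda>s. bt a b s * Ed a b n s)
      = integral {0..t} (\<lambda>s. bt a b s * Wd a b s - (\<Sum>k<n. bt a b s * Iseq a b k s))"
    unfolding Ed_def by (simp only: right_diff_distrib sum_distrib_left)
  also have "\<dots> = integral {0..t} (\<lambda>s. bt a b s * Wd a b s) - integral {0..t} (\<lambda>s. \<Sum>k<n. bt a b s * Iseq a b k s)"
    by (intro integral_diff integrable_prod cont_Wd integrable_sum cont_Iseq finite_lessThan)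
  finally have 1: "integral {0..t} (\<lambda>s. bt a b s * Ed a b n s)
      = integral {0..t} (\<lambda>s. bt a b s * Wd a b s) - integral {0..t} (\<lambda>s. \<Sum>k<n. bt a b s * Iseq a b k s)" .
  have 2: "integral {0..t} (\<lambda>s. \<Sum>k<n. bt a b s * Iseq a b k s) = (\<Sum>k<n. integral {0..t} (\<lambda>s. bt a b s * Iseq a b k s))"
    by (rule integral_sum) (auto intro: integrable_prod cont_Iseq)
  have 3: "integral {0..t} (\<lambda>s. bt a b s * Wd a b s) = Wd a b t - 1"
    using Wd_integral[OF assms] by (rule integral_unique)
  have 4: "(\<Sum>k<Suc n. Iseq a b k t) = 1 + (\<Sum>k<n. integral {0..t} (\<lambda>s. bt a b s * Iseq a b k s))"
    by (simp only: sum.lessThan_Suc_shift Iseq.simps)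
  have "integral {0..t} (\<lambda>s. bt a b s * Ed a b n s) = Wd a b t - 1 - (\<Sum>k<n. integral {0..t} (\<lambda>s. bt a b s * Iseq a b k s))"
    using 1 2 3 by simp
  then show ?thesis unfolding Ed_def[of a b "Suc n"] 4 by (simp add: algebra_simps)
qed

lemma power_integral:
  assumes "0 \<le> t"
  shows "((\<lambda>s::real. s ^ n) has_integral (t ^ Suc n / Suc n)) {0..t}"
proof -
  have "((\<lambda>s::real. s ^ n) has_integral (t ^ Suc n / Suc n - 0 ^ Suc n / Suc n)) {0..t}"
  proof (rule fundamental_theorem_of_calculus[OF assms])
    fix x :: real
    have "DERIV (\<lambda>s::real. s ^ Suc n / Suc n) x :> x ^ n"
      by (intro derivative_eq_intros) auto
    then have "((\<lambda>s::real. s ^ Suc n / Suc n) has_real_derivative x ^ n) (at x within {0..t})"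
      by (rule has_field_derivative_at_within)
    then show "((\<lambda>s::real. s ^ Suc n / Suc n) has_vector_derivative x ^ n) (at x within {0..t})"
      by (simp add: has_real_derivative_iff_has_vector_derivative)
  qed
  then show ?thesis by simp
qed

lemma expb:
  fixes x :: "'a::{real_normed_algebra_1,banach}"
  assumes "0 \<le> s" "s \<le> T"
  shows "norm (exp (s *\<^sub>R x)) \<le> exp (T * norm x)"
proof -
  have "norm (s *\<^sub>R x) \<le> T * norm x"
    using assms by (simp add: mult_right_mono)
  then have "exp (norm (s *\<^sub>R x)) \<le> exp (T * norm x)" by simp
  then show ?thesis using norm_exp[of "s *\<^sub>R x"] by linarith
qed

lemma Ed_bound:
  fixes a b :: "'a::{real_normed_algebra_1,banach}" and T :: real
  defines "C \<equiv> exp (T * norm a) * norm b * exp (T * norm a)"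
    and "M \<equiv> exp (T * norm a) * exp (T * norm (a + b))"
  shows "\<forall>t\<in>{0..T}. norm (Ed a b n t) \<le> M * C ^ n * t ^ n / fact n"
proof (induction n)
  case 0
  show ?case
  proof
    fix t assume t: "t \<in> {0..T}"
    have "norm (Wd a b t) \<le> norm (exp (t *\<^sub>R (-a))) * norm (exp (t *\<^sub>R (a + b)))"
      unfolding Wd_def by (rule norm_mult_ineq)
    also have "\<dots> \<le> M"
      unfolding M_def using t expb[of t T "-a"] expb[of t T "a + b"]
      by (intro mult_mono) auto
    finally show "norm (Ed a b 0 t) \<le> M * C ^ 0 * t ^ 0 / fact 0" by (simp add: Ed_def)
  qed
next
  case (Suc n)
  have C0: "0 \<le> C" unfolding C_def by simp
  have btC: "norm (bt a b s) \<le> C" if "s \<in> {0..T}" for s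
  proof -
    have "norm (bt a b s) \<le> norm (exp (s *\<^sub>R (-a))) * norm b * norm (exp (s *\<^sub>R a))"
      unfolding bt_def by (meson norm_mult_ineq mult_right_mono norm_ge_zero order_trans)
    also have "\<dots> \<le> C"
      unfolding C_def using that expb[of s T "-a"] expb[of s T "a"]
      by (intro mult_mono) auto
    finally show ?thesis .
  qed
  show ?case
  proof
    fix t assume t: "t \<in> {0..T}"
    then have t0: "0 \<le> t" by simp
    have "norm (Ed a b (Suc n) t) = norm (integral {0..t} (\<lambda>s. bt a b s * Ed a b n s))"
      by (simp only: Ed_rec[OF t0, of a b n])
    also have "\<dots> \<le> integral {0..t} (\<lambda>s. C * (M * C ^ n * s ^ n / fact n))"
    proof (rule integral_norm_bound_integral)
      show "(\<lambda>s. bt a b s * Ed a b n s) integrable_on {0..t}"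
        by (intro integrable_prod cont_Ed)
      show "(\<lambda>s. C * (M * C ^ n * s ^ n / fact n)) integrable_on {0..t}"
        by (intro integrable_continuous_interval continuous_intros) auto
      fix s assume s: "s \<in> {0..t}"
      then have sT: "s \<in> {0..T}" using t by auto
      have "norm (bt a b s * Ed a b n s) \<le> norm (bt a b s) * norm (Ed a b n s)" by (rule norm_mult_ineq)
      also have "\<dots> \<le> C * (M * C ^ n * s ^ n / fact n)"
        using btC[OF sT] Suc.IH sT C0 by (intro mult_mono) auto
      finally show "norm (bt a b s * Ed a b n s) \<le> C * (M * C ^ n * s ^ n / fact n)" .
    qed
    also have "\<dots> = C * (M * C ^ n / fact n) * (t ^ Suc n / Suc n)"
    proof -
      have "integral {0..t} (\<lambda>s. C * (M * C ^ n * s ^ n / fact n))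
          = integral {0..t} (\<lambda>s. (C * (M * C ^ n / fact n)) * s ^ n)"
        by (simp add: algebra_simps)
      also have "\<dots> = (C * (M * C ^ n / fact n)) * integral {0..t} (\<lambda>s. s ^ n)"
        by simp
      also have "integral {0..t} (\<lambda>s. s ^ n) = t ^ Suc n / Suc n"
        using power_integral[OF t0] by (rule integral_unique)
      finally show ?thesis .
    qed
    also have "\<dots> = M * C ^ Suc n * t ^ Suc n / fact (Suc n)"
      by (simp add: field_simps del: of_nat_Suc)
    finally show "norm (Ed a b (Suc n) t) \<le> M * C ^ Suc n * t ^ Suc n / fact (Suc n)" .
  qed
qed

theorem dyson_sums:
  fixes a b :: "'a::{real_normed_algebra_1,banach}"
  assumes t: "0 \<le> t"
  shows "(\<lambda>k. Iseq a b k t) sums Wd a b t"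
proof -
  define C where "C = exp (t * norm a) * norm b * exp (t * norm a)"
  define M where "M = exp (t * norm a) * exp (t * norm (a + b))"
  have bnd: "norm (Ed a b n t) \<le> M * ((C * t) ^ n / fact n)" for n
  proof -
    have "norm (Ed a b n t) \<le> M * C ^ n * t ^ n / fact n"
      using Ed_bound[where T=t and n=n and a=a and b=b] t unfolding C_def M_def by auto
    also have "M * C ^ n * t ^ n / fact n = M * ((C * t) ^ n / fact n)"
      by (simp only: power_mult_distrib mult.assoc times_divide_eq_right)
    finally show ?thesis .
  qed
  have z: "(\<lambda>n. (C * t) ^ n / fact n) \<longlonglongrightarrow> 0"
    using summable_LIMSEQ_zero [OF summable_exp[of "C * t"]] by (simp add: inverse_eq_divide mult.commute)
  have "(\<lambda>n. M * ((C * t) ^ n / fact n)) \<longlonglongrightarrow> M * 0"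
    by (intro tendsto_mult tendsto_const z)
  then have z2: "(\<lambda>n. M * ((C * t) ^ n / fact n)) \<longlonglongrightarrow> 0" by simp
  have "(\<lambda>n. Ed a b n t) \<longlonglongrightarrow> 0"
    by (rule Lim_null_comparison[OF always_eventually, OF allI, OF bnd z2])
  then have "(\<lambda>n. Wd a b t - Ed a b n t) \<longlonglongrightarrow> Wd a b t - 0"
    by (intro tendsto_diff tendsto_const)
  then show ?thesis unfolding sums_def Ed_def by simp
qed

fun oprod :: "'a::{real_normed_algebra_1,banach} \<Rightarrow> 'a \<Rightarrow> nat \<Rightarrow> (nat \<Rightarrow> real) \<Rightarrow> 'a" where
  "oprod a b 0 tau = 1"
| "oprod a b (Suc n) tau = oprod a b n tau * bt a b (tau (Suc n))"

lemma oprod_upd: "n < j \<Longrightarrow> oprod a b n (tau(j := u)) = oprod a b n tau"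
  by (induction n) auto

lemma nint_bridge:
  fixes a b :: "'a::{real_normed_algebra_1,banach}" and psi :: "'a \<Rightarrow> complex"
  assumes psi: "bounded_linear psi"
  shows "1 \<le> j \<Longrightarrow> j + r = k + 1 \<Longrightarrow> 0 \<le> s \<Longrightarrow>
    nint r j s tau (\<lambda>tau. psi (oprod a b k tau)) = psi (oprod a b (j - 1) tau * Iseq a b r s)"
proof (induction r arbitrary: j s tau)
  case 0
  then have "k = j - 1" by simp
  then show ?case by simp
next
  case (Suc r)
  define P where "P = oprod a b (j - 1) tau"
  have "nint (Suc r) j s tau (\<lambda>tau. psi (oprod a b k tau))
      = integral {0..s} (\<lambda>u. nint r (Suc j) u (tau(j := u)) (\<lambda>tau. psi (oprod a b k tau)))"
    by simp
  also have "\<dots> = integral {0..s} (\<lambda>u. psi (P * (bt a b u * Iseq a b r u)))"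
  proof (rule integral_cong)
    fix u assume u: "u \<in> {0..s}"
    have "nint r (Suc j) u (tau(j := u)) (\<lambda>tau. psi (oprod a b k tau))
        = psi (oprod a b (Suc j - 1) (tau(j := u)) * Iseq a b r u)"
      using Suc.prems u by (intro Suc.IH) auto
    also have "oprod a b (Suc j - 1) (tau(j := u)) = P * bt a b u"
    proof -
      obtain j' where j: "j = Suc j'" using Suc.prems(1) by (cases j) auto
      show ?thesis unfolding P_def j by (simp add: oprod_upd)
    qed
    finally show "nint r (Suc j) u (tau(j := u)) (\<lambda>tau. psi (oprod a b k tau))
        = psi (P * (bt a b u * Iseq a b r u))" by (simp only: mult.assoc)
  qed
  also have "\<dots> = integral {0..s} ((\<lambda>X. psi (P * X)) \<circ> (\<lambda>u. bt a b u * Iseq a b r u))"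
    by (simp add: o_def)
  also have "\<dots> = psi (P * integral {0..s} (\<lambda>u. bt a b u * Iseq a b r u))"
    by (intro integral_linear integrable_prod cont_Iseq bounded_linear_compose[OF psi]
        bounded_linear_mult_right)
  finally show ?case unfolding P_def by simp
qed


lemma ent_Mk[simp]: "ent (Mk A) = A"
  by (simp add: Mk_inverse)

lemma ent_sum: "ent (sum f S) i j = (\<Sum>k\<in>S. ent (f k) i j)"
  by (induction S rule: infinite_finite_induct) auto

lemma sum_delta2:
  fixes f :: "'n::finite \<Rightarrow> 'm::finite \<Rightarrow> 'c::comm_monoid_add"
  shows "(\<Sum>i\<in>UNIV. \<Sum>j\<in>UNIV. if a = i \<and> b = j then f i j else 0) = f a b"
proof -
  have "(\<Sum>j\<in>UNIV. if a = i \<and> b = j then f i j else 0) = (if a = i then f i b else 0)" for i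
    by (cases "a = i") simp_all
  then show ?thesis by simp
qed

definition Eu :: "'n \<Rightarrow> 'n \<Rightarrow> complex \<Rightarrow> 'n sqm" where
  "Eu i j c = Mk (\<lambda>a b. if a = i \<and> b = j then c else 0)"

lemma sqm_decomp:
  fixes x :: "'n::finite sqm"
  shows "x = (\<Sum>i\<in>UNIV. \<Sum>j\<in>UNIV. Re (ent x i j) *\<^sub>R Eu i j 1 + Im (ent x i j) *\<^sub>R Eu i j \<i>)"
proof (rule sqm_eqI)
  fix a b
  have "ent (\<Sum>i\<in>UNIV. \<Sum>j\<in>UNIV. Re (ent x i j) *\<^sub>R Eu i j 1 + Im (ent x i j) *\<^sub>R Eu i j \<i>) a b
     = (\<Sum>i\<in>UNIV. \<Sum>j\<in>UNIV. if a = i \<and> b = j then Re (ent x i j) *\<^sub>R 1 + Im (ent x i j) *\<^sub>R \<i> else 0)"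
    by (simp add: ent_sum Eu_def) (intro sum.cong refl; simp)
  also have "\<dots> = Re (ent x a b) *\<^sub>R 1 + Im (ent x a b) *\<^sub>R \<i>"
    by (rule sum_delta2)
  also have "\<dots> = ent x a b" by (simp add: complex_eq_iff)
  finally show "ent x a b = ent (\<Sum>i\<in>UNIV. \<Sum>j\<in>UNIV. Re (ent x i j) *\<^sub>R Eu i j 1 + Im (ent x i j) *\<^sub>R Eu i j \<i>) a b" ..
qed

lemma linear_bounded_sqm:
  fixes h :: "'n::finite sqm \<Rightarrow> 'b::real_normed_vector"
  assumes lin: "linear h"
  shows "bounded_linear h"
proof -
  define K where "K = (\<Sum>i\<in>(UNIV::'n set). \<Sum>j\<in>(UNIV::'n set). norm (h (Eu i j 1)) + norm (h (Eu i j \<i>)))"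
  show ?thesis
  proof (rule bounded_linear_intro[where K=K])
    fix x y :: "'n sqm" and r :: real
    show "h (x + y) = h x + h y" by (rule linear_add[OF lin])
    show "h (r *\<^sub>R x) = r *\<^sub>R h x" by (rule linear_scale[OF lin])
    let ?f = "\<lambda>i j. Re (ent x i j) *\<^sub>R h (Eu i j 1) + Im (ent x i j) *\<^sub>R h (Eu i j \<i>)"
    have "h x = h (\<Sum>i\<in>UNIV. \<Sum>j\<in>UNIV. Re (ent x i j) *\<^sub>R Eu i j 1 + Im (ent x i j) *\<^sub>R Eu i j \<i>)"
      by (rule arg_cong[OF sqm_decomp])
    also have "\<dots> = (\<Sum>i\<in>UNIV. \<Sum>j\<in>UNIV. ?f i j)"
      by (simp only: linear_sum[OF lin] linear_add[OF lin] linear_scale[OF lin] o_def)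
    finally have hx: "h x = (\<Sum>i\<in>UNIV. \<Sum>j\<in>UNIV. ?f i j)" .
    have "norm (h x) \<le> (\<Sum>i\<in>UNIV. norm (\<Sum>j\<in>UNIV. ?f i j))"
      unfolding hx by (rule norm_sum)
    also have "\<dots> \<le> (\<Sum>i\<in>UNIV. \<Sum>j\<in>UNIV. norm (?f i j))"
      by (intro sum_mono norm_sum)
    also have "\<dots> \<le> (\<Sum>i\<in>UNIV. \<Sum>j\<in>UNIV. norm x * (norm (h (Eu i j 1)) + norm (h (Eu i j \<i>))))"
    proof (intro sum_mono)
      fix i j
      have r: "\<bar>Re (ent x i j)\<bar> \<le> norm x" and m: "\<bar>Im (ent x i j)\<bar> \<le> norm x"
        using norm_ent_le[of x i j] abs_Re_le_cmod[of "ent x i j"] abs_Im_le_cmod[of "ent x i j"] by linarith+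
      have "norm (?f i j) \<le> norm (Re (ent x i j) *\<^sub>R h (Eu i j 1)) + norm (Im (ent x i j) *\<^sub>R h (Eu i j \<i>))"
        by (rule norm_triangle_ineq)
      also have "\<dots> = \<bar>Re (ent x i j)\<bar> * norm (h (Eu i j 1)) + \<bar>Im (ent x i j)\<bar> * norm (h (Eu i j \<i>))"
        by simp
      also have "\<dots> \<le> norm x * norm (h (Eu i j 1)) + norm x * norm (h (Eu i j \<i>))"
        by (intro add_mono mult_right_mono r m norm_ge_zero)
      finally show "norm (?f i j) \<le> norm x * (norm (h (Eu i j 1)) + norm (h (Eu i j \<i>)))"
        by (simp only: distrib_left)
    qed
    also have "\<dots> = norm x * K" unfolding K_def by (simp only: sum_distrib_left)
    finally show "norm (h x) \<le> norm x * K" .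
  qed
qed

lemma exp_hom:
  fixes h :: "'a::{real_normed_algebra_1,banach} \<Rightarrow> 'b::{real_normed_algebra_1,banach}"
  assumes h: "bounded_linear h" and p: "\<And>n. h (x ^ n) = (h x) ^ n"
  shows "h (exp x) = exp (h x)"
proof -
  have "(\<lambda>n. x ^ n /\<^sub>R fact n) sums exp x" by (rule exp_converges)
  then have "(\<lambda>n. h (x ^ n /\<^sub>R fact n)) sums h (exp x)" by (rule bounded_linear.sums[OF h])
  moreover have "h (x ^ n /\<^sub>R fact n) = (h x) ^ n /\<^sub>R fact n" for n
    by (simp add: p linear_scale[OF bounded_linear.linear[OF h]])
  ultimately have "(\<lambda>n. (h x) ^ n /\<^sub>R fact n) sums h (exp x)" by simp
  moreover have "(\<lambda>n. (h x) ^ n /\<^sub>R fact n) sums exp (h x)" by (rule exp_converges)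
  ultimately show ?thesis using sums_unique2 by blast
qed

lemma ent_power: "ent (x ^ n) = mpow (ent x) n"
  by (induction n) (auto simp: ent_one ent_mult)

lemma linear_ent: "linear (\<lambda>x::'n::finite sqm. ent x i j)"
  by (rule linearI) auto

lemma mexp_ent: "mexp (A :: 'n::finite cmat) = ent (exp (Mk A))"
proof (intro ext)
  fix i j
  have bl: "bounded_linear (\<lambda>x::'n sqm. ent x i j)" by (intro linear_bounded_sqm linear_ent)
  have "(\<lambda>n. Mk A ^ n /\<^sub>R fact n) sums exp (Mk A)" by (rule exp_converges)
  then have "(\<lambda>n. ent (Mk A ^ n /\<^sub>R fact n) i j) sums ent (exp (Mk A)) i j"
    by (rule bounded_linear.sums[OF bl])
  moreover have "ent (Mk A ^ n /\<^sub>R fact n) i j = mpow A n i j / of_nat (fact n)" for n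
    by (simp only: ent_scaleR ent_power ent_Mk) (simp add: scaleR_conv_of_real divide_inverse mult.commute)
  ultimately have "(\<lambda>n. mpow A n i j / of_nat (fact n)) sums ent (exp (Mk A)) i j" by simp
  then show "mexp A i j = ent (exp (Mk A)) i j" unfolding mexp_def by (simp add: sums_iff)
qed

definition mtr :: "'n::finite cmat \<Rightarrow> complex" where "mtr X = (\<Sum>n\<in>UNIV. X n n)"

lemma mtr_comm: "mtr (mmult A B) = mtr (mmult B (A::'n::finite cmat))"
  unfolding mtr_def mmult_def by (subst sum.swap) (simp add: mult.commute)

lemma sum_UNIV_prod: "(\<Sum>p\<in>(UNIV::('a::finite \<times> 'b::finite) set). f p) = (\<Sum>a\<in>UNIV. \<Sum>b\<in>UNIV. f (a, b))"
  by (simp add: sum.cartesian_product)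

definition sapp :: "('n::finite \<times> 'n) sqm \<Rightarrow> 'n cmat \<Rightarrow> 'n cmat" where
  "sapp S X = (\<lambda>n m. \<Sum>p\<in>UNIV. ent S (n, m) p * X (fst p) (snd p))"

lemma sapp_mult: "sapp (S * T) X = sapp S (sapp T X)"
  unfolding sapp_def ent_mult mmult_def
  by (auto simp: sum_distrib_left sum_distrib_right mult.assoc intro!: ext sum.swap[THEN trans])

lemma sapp_one: "sapp 1 X = X"
proof (intro ext)
  fix n m
  have "sapp 1 X n m = (\<Sum>p\<in>UNIV. (if (n, m) = p then X (fst p) (snd p) else 0))"
    unfolding sapp_def ent_one mid_def by (intro sum.cong) auto
  also have "\<dots> = X n m" by (simp add: sum.delta)
  finally show "sapp 1 X n m = X n m" .
qed

lemma sapp_add: "sapp (S + T) X = (\<lambda>n m. sapp S X n m + sapp T X n m)"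
  unfolding sapp_def by (simp add: distrib_right sum.distrib)

lemma sapp_scaleR: "sapp (r *\<^sub>R S) X = (\<lambda>n m. r *\<^sub>R sapp S X n m)"
  unfolding sapp_def by (simp add: scaleR_sum_right)

definition Eun :: "'n \<Rightarrow> 'n \<Rightarrow> 'n cmat" where
  "Eun i j = (\<lambda>a b. if a = i \<and> b = j then 1 else 0)"

lemma sapp_unit: "sapp S (Eun i j) n m = ent S (n, m) (i, j)"
proof -
  have "sapp S (Eun i j) n m = (\<Sum>p\<in>UNIV. if p = (i, j) then ent S (n, m) p else 0)"
    unfolding sapp_def Eun_def by (intro sum.cong) auto
  then show ?thesis by (simp add: sum.delta)
qed

lemma sapp_inj: "(\<And>X. sapp S X = sapp T X) \<Longrightarrow> S = T"
proof (rule sqm_eqI)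
  fix p q
  assume "\<And>X. sapp S X = sapp T X"
  then have "sapp S (Eun (fst q) (snd q)) (fst p) (snd p) = sapp T (Eun (fst q) (snd q)) (fst p) (snd p)" by simp
  then show "ent S p q = ent T p q" by (simp add: sapp_unit)
qed

definition Lmul :: "'n::finite sqm \<Rightarrow> ('n \<times> 'n) sqm" where
  "Lmul A = Mk (\<lambda>p q. ent A (fst p) (fst q) * (if snd p = snd q then 1 else 0))"

definition Rmul :: "'n::finite sqm \<Rightarrow> ('n \<times> 'n) sqm" where
  "Rmul B = Mk (\<lambda>p q. (if fst p = fst q then 1 else 0) * ent B (snd q) (snd p))"

lemma sapp_Lmul: "sapp (Lmul A) X = mmult (ent A) X"
proof (intro ext)
  fix n m
  have "sapp (Lmul A) X n m = (\<Sum>a\<in>UNIV. \<Sum>b\<in>UNIV. ent A n a * (if m = b then 1 else 0) * X a b)"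
    unfolding sapp_def Lmul_def by (simp add: sum_UNIV_prod)
  also have "\<dots> = (\<Sum>a\<in>UNIV. ent A n a * X a m)"
    by (intro sum.cong refl) (simp add: if_distrib[of "\<lambda>x. _ * x * _"] cong: if_cong)
  finally show "sapp (Lmul A) X n m = mmult (ent A) X n m" by (simp add: mmult_def)
qed

lemma sapp_Rmul: "sapp (Rmul B) X = mmult X (ent B)"
proof (intro ext)
  fix n m
  have "sapp (Rmul B) X n m = (\<Sum>a\<in>UNIV. \<Sum>b\<in>UNIV. (if n = a then 1 else 0) * ent B b m * X a b)"
    unfolding sapp_def Rmul_def by (simp add: sum_UNIV_prod)
  also have "\<dots> = (\<Sum>b\<in>UNIV. X n b * ent B b m)"
    by (simp add: if_distrib[of "\<lambda>x. x * _ * _"] cong: if_cong) (subst sum.swap, simp add: mult.commute)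
  finally show "sapp (Rmul B) X n m = mmult X (ent B) n m" by (simp add: mmult_def)
qed

lemma Lmul_mult: "Lmul (A * B) = Lmul A * Lmul B"
  by (rule sapp_inj) (simp add: sapp_mult sapp_Lmul ent_mult mmult_assoc)

lemma Rmul_mult: "Rmul (A * B) = Rmul B * Rmul A"
  by (rule sapp_inj) (simp add: sapp_mult sapp_Rmul ent_mult mmult_assoc)

lemma Lmul_one: "Lmul (1 :: 'n::finite sqm) = 1"
  by (rule sapp_inj) (simp add: sapp_one sapp_Lmul ent_one)

lemma Rmul_one: "Rmul (1 :: 'n::finite sqm) = 1"
  by (rule sapp_inj) (simp add: sapp_one sapp_Rmul ent_one)

lemma LR_comm: "Lmul A * Rmul B = Rmul B * Lmul A"
  by (rule sapp_inj) (simp add: sapp_mult sapp_Rmul sapp_Lmul mmult_assoc)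

lemma linear_Lmul: "linear Lmul"
  by (rule linearI; rule sqm_eqI) (simp_all add: Lmul_def algebra_simps)

lemma linear_Rmul: "linear Rmul"
  by (rule linearI; rule sqm_eqI) (simp_all add: Rmul_def algebra_simps)

lemma Lmul_power: "Lmul (x ^ n) = (Lmul x) ^ n"
  by (induction n) (simp_all add: Lmul_one Lmul_mult)

lemma Rmul_power: "Rmul (x ^ n) = (Rmul x) ^ n"
  by (induction n) (simp_all add: Rmul_one Rmul_mult power_Suc2 power_commutes)

lemma exp_Lmul: "exp (Lmul x) = Lmul (exp x)"
  by (rule exp_hom[symmetric]) (simp_all add: linear_bounded_sqm linear_Lmul Lmul_power)

lemma exp_Rmul: "exp (Rmul x) = Rmul (exp x)"
  by (rule exp_hom[symmetric]) (simp_all add: linear_bounded_sqm linear_Rmul Rmul_power)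

lemma sapp_exp_LR:
  "sapp (exp (t *\<^sub>R (Lmul A + Rmul B))) X = mmult (mmult (ent (exp (t *\<^sub>R A))) X) (ent (exp (t *\<^sub>R B)))"
proof -
  have "t *\<^sub>R (Lmul A + Rmul B) = Lmul (t *\<^sub>R A) + Rmul (t *\<^sub>R B)"
    by (simp add: linear_scale[OF linear_Lmul] linear_scale[OF linear_Rmul] scaleR_add_right)
  moreover have "exp (Lmul (t *\<^sub>R A) + Rmul (t *\<^sub>R B)) = exp (Lmul (t *\<^sub>R A)) * exp (Rmul (t *\<^sub>R B))"
    by (rule exp_add_commuting) (rule LR_comm)
  ultimately show ?thesis
    by (simp add: exp_Lmul exp_Rmul sapp_mult sapp_Lmul sapp_Rmul mmult_assoc)
qed

definition adj :: "'n::finite sqm \<Rightarrow> 'n sqm" where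
  "adj x = Mk (\<lambda>i j. cnj (ent x j i))"

lemma linear_adj: "linear adj"
  by (rule linearI; rule sqm_eqI) (simp_all add: adj_def)

lemma adj_mult: "adj (x * y) = adj y * adj x"
  by (rule sqm_eqI) (simp add: adj_def ent_mult mmult_def mult.commute)

lemma adj_one: "adj (1 :: 'n::finite sqm) = 1"
  by (rule sqm_eqI) (simp add: adj_def ent_one mid_def)

lemma adj_power: "adj (x ^ n) = (adj x) ^ n"
  by (induction n) (simp_all add: adj_one adj_mult power_Suc2 power_commutes)

lemma exp_adj: "adj (exp x) = exp (adj x)"
  by (rule exp_hom) (simp_all add: linear_bounded_sqm linear_adj adj_power)


definition KE :: "'e::finite cmat \<Rightarrow> 'e sqm" where "KE HE = Mk (msmult (- \<i>) HE)"

lemma Mk_scale: "Mk (msmult (c * of_real s) A) = s *\<^sub>R Mk (msmult c (A::'e::finite cmat))"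
  by (rule sqm_eqI) (simp only: ent_scaleR ent_Mk msmult_def, simp add: scaleR_conv_of_real)

lemma U_exp: "U_E HE s = ent (exp (s *\<^sub>R KE HE))"
  unfolding U_E_def KE_def by (simp only: mexp_ent Mk_scale)

lemma exp_scale_add: "exp (a *\<^sub>R K) * exp (b *\<^sub>R K) = exp ((a + b) *\<^sub>R (K::'a::{real_normed_algebra_1,banach}))"
proof -
  have "exp (a *\<^sub>R K + b *\<^sub>R K) = exp (a *\<^sub>R K) * exp (b *\<^sub>R K)"
    by (rule exp_add_commuting) simp
  then show ?thesis by (simp add: scaleR_add_left)
qed

lemma U_add: "mmult (U_E HE a) (U_E HE b) = U_E HE (a + b)"
  unfolding U_exp ent_mult[symmetric] exp_scale_add ..

lemma U_zero: "U_E HE 0 = mid"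
  unfolding U_exp by (simp add: ent_one)

lemma adj_KE:
  assumes "hermitian HE"
  shows "adj (KE HE) = - KE HE"
proof (rule sqm_eqI)
  fix i j
  have "HE i j = cnj (HE j i)" using assms unfolding hermitian_def by blast
  then show "ent (adj (KE HE)) i j = ent (- KE HE) i j"
    by (simp add: adj_def KE_def msmult_def)
qed

lemma U_cnj:
  assumes "hermitian HE"
  shows "cnj (U_E HE s m y) = U_E HE (-s) y m"
proof -
  have "cnj (U_E HE s m y) = ent (adj (exp (s *\<^sub>R KE HE))) y m"
    unfolding U_exp by (simp add: adj_def)
  also have "adj (exp (s *\<^sub>R KE HE)) = exp ((-s) *\<^sub>R KE HE)"
    unfolding exp_adj linear_scale[OF linear_adj] adj_KE[OF assms] by simp
  finally show ?thesis unfolding U_exp .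
qed

lemma U_neg_form: "mexp (msmult (\<i> * of_real s) HE) = U_E HE (-s)"
  unfolding U_E_def by simp

definition Uop :: "'e::finite cmat \<Rightarrow> real \<Rightarrow> 'e cmat \<Rightarrow> 'e cmat" where
  "Uop HE s X = mmult (mmult (U_E HE s) X) (U_E HE (-s))"

lemma Uop_add: "Uop HE a (Uop HE b X) = Uop HE (a + b) X"
proof -
  have "Uop HE a (Uop HE b X) = mmult (mmult (mmult (U_E HE a) (U_E HE b)) X) (mmult (U_E HE (-b)) (U_E HE (-a)))"
    unfolding Uop_def by (simp add: mmult_assoc)
  then show ?thesis unfolding U_add Uop_def by (simp add: add.commute)
qed

lemma Uop_zero: "Uop HE 0 X = X"
  unfolding Uop_def by (simp add: U_zero)

lemma mtr_Uop: "mtr (Uop HE s X) = mtr X"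
proof -
  have "mtr (Uop HE s X) = mtr (mmult (mmult (U_E HE (-s)) (U_E HE s)) X)"
    unfolding Uop_def mtr_comm[of "mmult (U_E HE s) X" "U_E HE (-s)"] by (simp only: mmult_assoc)
  then show ?thesis by (simp add: U_add U_zero)
qed

lemma rhoE_t_Uop: "rhoE_t HE rhoE s = Uop HE s rhoE"
  unfolding rhoE_t_def Uop_def U_neg_form ..

lemma Uop_entry: "Uop HE s X n m = (\<Sum>x\<in>UNIV. \<Sum>y\<in>UNIV. U_E HE s n x * X x y * U_E HE (-s) y m)"
  unfolding Uop_def mmult_def
  by (simp add: sum_distrib_right sum_distrib_left) (subst sum.swap, simp add: mult.assoc)

lemma Uop_scale: "Uop HE s (\<lambda>n m. c * X n m) = (\<lambda>n m. c * Uop HE s X n m)"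
  unfolding Uop_def mmult_def by (simp add: sum_distrib_left sum_distrib_right mult_ac)

definition L0 :: "'e::finite cmat \<Rightarrow> ('e \<times> 'e) sqm" where
  "L0 HE = Lmul (KE HE) + Rmul (- KE HE)"

lemma sapp_expL0: "sapp (exp (s *\<^sub>R L0 HE)) X = Uop HE s X"
  unfolding L0_def sapp_exp_LR Uop_def U_exp by simp

definition Had :: "('e \<Rightarrow> 'e \<Rightarrow> complex) \<Rightarrow> 'e cmat \<Rightarrow> 'e cmat" where
  "Had w X = (\<lambda>n m. w n m * X n m)"

definition HadS :: "('e::finite \<Rightarrow> 'e \<Rightarrow> complex) \<Rightarrow> ('e \<times> 'e) sqm" where
  "HadS w = Mk (\<lambda>p q. if p = q then w (fst p) (snd p) else 0)"

lemma sapp_HadS: "sapp (HadS w) X = Had w X"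
proof (intro ext)
  fix n m
  have "sapp (HadS w) X n m = (\<Sum>p\<in>UNIV. if p = (n, m) then w n m * X n m else 0)"
    unfolding sapp_def HadS_def by (intro sum.cong) auto
  then show "sapp (HadS w) X n m = Had w X n m" by (simp add: Had_def)
qed

fun Gr :: "'e::finite cmat \<Rightarrow> nat \<Rightarrow> (nat \<Rightarrow> 'e \<Rightarrow> 'e \<Rightarrow> complex) \<Rightarrow> (nat \<Rightarrow> real) \<Rightarrow> 'e cmat \<Rightarrow> complex" where
  "Gr HE 0 w tau X = mtr X"
| "Gr HE (Suc k) w tau X = Gr HE k w tau (Uop HE (tau k - tau (Suc k)) (Had (w (Suc k)) X))"

lemma Gr_scale: "Gr HE k w tau (\<lambda>n m. c * X n m) = c * Gr HE k w tau X"
proof (induction k arbitrary: X)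
  case 0
  then show ?case by (simp add: mtr_def sum_distrib_left)
next
  case (Suc k)
  have "Had (w (Suc k)) (\<lambda>n m. c * X n m) = (\<lambda>n m. c * Had (w (Suc k)) X n m)"
    by (simp add: Had_def mult_ac)
  then show ?case by (simp add: Uop_scale Suc.IH)
qed

lemma Gr_wscale: "Gr HE k (\<lambda>l x y. c * w l x y) tau X = c ^ k * Gr HE k w tau X"
proof (induction k arbitrary: X)
  case 0
  then show ?case by simp
next
  case (Suc k)
  have "Had (\<lambda>x y. c * w (Suc k) x y) X = (\<lambda>n m. c * Had (w (Suc k)) X n m)"
    by (simp add: Had_def mult_ac)
  then show ?case by (simp add: Uop_scale Suc.IH Gr_scale)
qed

lemma sapp_bt: "sapp (bt (L0 HE) (HadS w) s) X = Uop HE (-s) (Had w (Uop HE s X))"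
proof -
  have "s *\<^sub>R (- L0 HE) = (-s) *\<^sub>R L0 HE" by simp
  then show ?thesis
    unfolding bt_def by (simp only: sapp_mult sapp_expL0 sapp_HadS)
qed

lemma tr_oprod:
  "mtr (sapp (oprod (L0 HE) (HadS w) k tau) X) = Gr HE k (\<lambda>_. w) tau (Uop HE (tau k) X)"
proof (induction k arbitrary: X)
  case 0
  then show ?case by (simp add: sapp_one mtr_Uop)
next
  case (Suc k)
  have "mtr (sapp (oprod (L0 HE) (HadS w) (Suc k) tau) X)
      = mtr (sapp (oprod (L0 HE) (HadS w) k tau) (Uop HE (- tau (Suc k)) (Had w (Uop HE (tau (Suc k)) X))))"
    by (simp add: sapp_mult sapp_bt)
  also have "\<dots> = Gr HE k (\<lambda>_. w) tau (Uop HE (tau k - tau (Suc k)) (Had w (Uop HE (tau (Suc k)) X)))"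
    by (simp add: Suc.IH Uop_add)
  finally show ?case by simp
qed


definition Gt :: "'e::finite cmat \<Rightarrow> nat \<Rightarrow> (nat \<Rightarrow> 'e \<Rightarrow> 'e \<Rightarrow> complex) \<Rightarrow> (nat \<Rightarrow> real) \<Rightarrow> 'e cmat \<Rightarrow> complex" where
  "Gt HE k w tau X = (\<Sum>n\<in>ktuples k UNIV. \<Sum>m\<in>ktuples k UNIV.
     (if n 1 = m 1 then 1 else 0) * (\<Prod>l\<in>{1..k}. w l (n l) (m l)) * X (n k) (m k)
     * (\<Prod>l\<in>{1..<k}. T_E HE (tau l - tau (Suc l)) (n l) (m l) (n (Suc l)) (m (Suc l))))"

lemma sum_ktuples_Suc:
  "sum g (ktuples (Suc k) A) = (\<Sum>n\<in>ktuples k A. \<Sum>y\<in>A. g (n(Suc k := y)))"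
proof -
  have eq: "ktuples (Suc k) A = (\<lambda>(y, g). g(Suc k := y)) ` (A \<times> ktuples k A)"
    unfolding ktuples_def by (simp add: atLeastAtMostSuc_conv PiE_insert_eq)
  have inj: "inj_on (\<lambda>(y, g). g(Suc k := y)) (A \<times> ktuples k A)"
    unfolding ktuples_def using inj_combinator[of "Suc k" "{1..k}" "\<lambda>_. A"] by simp
  have "sum g (ktuples (Suc k) A) = (\<Sum>p\<in>A \<times> ktuples k A. g ((\<lambda>(y, g). g(Suc k := y)) p))"
    unfolding eq by (simp add: sum.reindex[OF inj])
  also have "\<dots> = (\<Sum>y\<in>A. \<Sum>n\<in>ktuples k A. g (n(Suc k := y)))"
    by (simp add: sum.cartesian_product case_prod_beta)
  also have "\<dots> = (\<Sum>n\<in>ktuples k A. \<Sum>y\<in>A. g (n(Suc k := y)))"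
    by (rule sum.swap)
  finally show ?thesis .
qed

lemma ktuples_mem: "n \<in> ktuples k A \<Longrightarrow> l \<in> {1..k} \<Longrightarrow> n l \<in> A"
  unfolding ktuples_def by auto

lemma finite_ktuples: "finite A \<Longrightarrow> finite (ktuples k A)"
  unfolding ktuples_def by (intro finite_PiE) auto

lemma GtOne: "Gt HE 1 w tau X = (\<Sum>x\<in>UNIV. w 1 x x * X x x)"
proof -
  have k1: "ktuples 1 (UNIV::'a set) = ktuples (Suc 0) UNIV" by simp
  have "Gt HE 1 w tau X = (\<Sum>x\<in>UNIV. \<Sum>y\<in>UNIV. (if x = y then 1 else 0) * w 1 x y * X x y)"
    unfolding Gt_def k1 sum_ktuples_Suc by (simp add: ktuples_def sum_ktuples_Suc)
  also have "\<dots> = (\<Sum>x\<in>UNIV. w 1 x x * X x x)"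
    by (intro sum.cong refl) (simp add: if_distrib[of "\<lambda>z. z * _ * _"] cong: if_cong)
  finally show ?thesis .
qed

lemma GtSuc:
  assumes herm: "hermitian HE" and k: "1 \<le> k"
  shows "Gt HE (Suc k) w tau X = Gt HE k w tau (Uop HE (tau k - tau (Suc k)) (Had (w (Suc k)) X))"
proof -
  define s where "s = tau k - tau (Suc k)"
  define P where "P n m = (if n 1 = m 1 then 1 else 0) * (\<Prod>l\<in>{1..k}. w l (n l) (m l))
      * (\<Prod>l\<in>{1..<k}. T_E HE (tau l - tau (Suc l)) (n l) (m l) (n (Suc l)) (m (Suc l)))" for n m
  define Q where "Q n m x y = w (Suc k) x y * X x y * (U_E HE s (n k) x * U_E HE (-s) y (m k))" for n m x y
  let ?kt = "ktuples k (UNIV::'a set)"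
  have trm: "(if (n(Suc k := x)) 1 = (m(Suc k := y)) 1 then 1 else 0)
      * (\<Prod>l\<in>{1..Suc k}. w l ((n(Suc k := x)) l) ((m(Suc k := y)) l))
      * X ((n(Suc k := x)) (Suc k)) ((m(Suc k := y)) (Suc k))
      * (\<Prod>l\<in>{1..<Suc k}. T_E HE (tau l - tau (Suc l)) ((n(Suc k := x)) l) ((m(Suc k := y)) l)
           ((n(Suc k := x)) (Suc l)) ((m(Suc k := y)) (Suc l)))
     = P n m * Q n m x y" for n m x y
  proof -
    have p1: "(\<Prod>l\<in>{1..Suc k}. w l ((n(Suc k := x)) l) ((m(Suc k := y)) l))
        = w (Suc k) x y * (\<Prod>l\<in>{1..k}. w l (n l) (m l))"
    proof -
      have "(\<Prod>l\<in>{1..Suc k}. w l ((n(Suc k := x)) l) ((m(Suc k := y)) l))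
          = w (Suc k) x y * (\<Prod>l\<in>{1..k}. w l ((n(Suc k := x)) l) ((m(Suc k := y)) l))"
        by (simp add: atLeastAtMostSuc_conv)
      also have "(\<Prod>l\<in>{1..k}. w l ((n(Suc k := x)) l) ((m(Suc k := y)) l)) = (\<Prod>l\<in>{1..k}. w l (n l) (m l))"
        by (intro prod.cong) auto
      finally show ?thesis .
    qed
    have ins: "{1..<Suc k} = insert k {1..<k}" using k by (simp add: atLeastLessThanSuc)
    have p2: "(\<Prod>l\<in>{1..<Suc k}. T_E HE (tau l - tau (Suc l)) ((n(Suc k := x)) l) ((m(Suc k := y)) l)
           ((n(Suc k := x)) (Suc l)) ((m(Suc k := y)) (Suc l)))
        = T_E HE s (n k) (m k) x y * (\<Prod>l\<in>{1..<k}. T_E HE (tau l - tau (Suc l)) (n l) (m l) (n (Suc l)) (m (Suc l)))"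
    proof -
      have "(\<Prod>l\<in>{1..<Suc k}. T_E HE (tau l - tau (Suc l)) ((n(Suc k := x)) l) ((m(Suc k := y)) l)
           ((n(Suc k := x)) (Suc l)) ((m(Suc k := y)) (Suc l)))
          = T_E HE s (n k) (m k) x y * (\<Prod>l\<in>{1..<k}. T_E HE (tau l - tau (Suc l)) ((n(Suc k := x)) l) ((m(Suc k := y)) l)
           ((n(Suc k := x)) (Suc l)) ((m(Suc k := y)) (Suc l)))"
        unfolding ins s_def by simp
      also have "(\<Prod>l\<in>{1..<k}. T_E HE (tau l - tau (Suc l)) ((n(Suc k := x)) l) ((m(Suc k := y)) l)
           ((n(Suc k := x)) (Suc l)) ((m(Suc k := y)) (Suc l)))
          = (\<Prod>l\<in>{1..<k}. T_E HE (tau l - tau (Suc l)) (n l) (m l) (n (Suc l)) (m (Suc l)))"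
        by (intro prod.cong) auto
      finally show ?thesis .
    qed
    have t: "T_E HE s (n k) (m k) x y = U_E HE s (n k) x * U_E HE (-s) y (m k)"
      by (simp add: T_E_def U_cnj[OF herm])
    have n1: "(n(Suc k := x)) 1 = n 1" "(m(Suc k := y)) 1 = m 1" using k by auto
    show ?thesis unfolding p1 p2 t n1 by (simp add: P_def Q_def mult_ac)
  qed
  have "Gt HE (Suc k) w tau X = (\<Sum>n\<in>?kt. \<Sum>x\<in>UNIV. \<Sum>m\<in>?kt. \<Sum>y\<in>UNIV. P n m * Q n m x y)"
    unfolding Gt_def sum_ktuples_Suc by (simp only: trm)
  also have "\<dots> = (\<Sum>n\<in>?kt. \<Sum>m\<in>?kt. \<Sum>x\<in>UNIV. \<Sum>y\<in>UNIV. P n m * Q n m x y)"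
    by (rule sum.cong[OF refl], rule sum.swap)
  also have "\<dots> = (\<Sum>n\<in>?kt. \<Sum>m\<in>?kt. P n m * (\<Sum>x\<in>UNIV. \<Sum>y\<in>UNIV. Q n m x y))"
    by (simp only: sum_distrib_left)
  also have "\<dots> = Gt HE k w tau (Uop HE s (Had (w (Suc k)) X))"
    unfolding Gt_def
    by (intro sum.cong refl) (simp add: P_def Q_def Uop_entry Had_def sum_distrib_left mult_ac)
  finally show ?thesis unfolding s_def .
qed

lemma GtGr:
  assumes herm: "hermitian HE"
  shows "1 \<le> k \<Longrightarrow> Gt HE k w tau X = Gr HE k w tau X"
proof (induction k arbitrary: X)
  case 0
  then show ?case by simp
next
  case (Suc k)
  show ?case
  proof (cases "k = 0")
    case True
    have "Gr HE 1 w tau X = mtr (Had (w 1) X)"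
      by (simp add: mtr_Uop)
    then show ?thesis using True GtOne[of HE w tau X] by (simp add: mtr_def Had_def)
  next
    case False
    then have "1 \<le> k" by simp
    then show ?thesis using Suc.IH by (simp add: GtSuc[OF herm])
  qed
qed

lemma Gt_upd:
  fixes HE :: "'e::finite cmat"
  assumes l: "l \<in> {1..k}"
  shows "Gt HE k (w(l := h)) tau X = (\<Sum>n\<in>ktuples k UNIV. \<Sum>m\<in>ktuples k UNIV. h (n l) (m l) *
     ((if n 1 = m 1 then 1 else 0) * (\<Prod>i\<in>{1..k} - {l}. w i (n i) (m i)) * X (n k) (m k)
     * (\<Prod>i\<in>{1..<k}. T_E HE (tau i - tau (Suc i)) (n i) (m i) (n (Suc i)) (m (Suc i)))))"
proof -
  have "(\<Prod>i\<in>{1..k}. (w(l := h)) i (n i) (m i)) = h (n l) (m l) * (\<Prod>i\<in>{1..k} - {l}. w i (n i) (m i))" for n m :: "nat \<Rightarrow> 'e"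
  proof -
    have "(\<Prod>i\<in>{1..k}. (w(l := h)) i (n i) (m i)) = (w(l := h)) l (n l) (m l) * (\<Prod>i\<in>{1..k} - {l}. (w(l := h)) i (n i) (m i))"
      by (rule prod.remove) (use l in auto)
    also have "(\<Prod>i\<in>{1..k} - {l}. (w(l := h)) i (n i) (m i)) = (\<Prod>i\<in>{1..k} - {l}. w i (n i) (m i))"
      by (intro prod.cong) auto
    finally show ?thesis by simp
  qed
  then show ?thesis unfolding Gt_def by (simp add: mult_ac)
qed

lemma Gt_pos:
  fixes HE :: "'e::finite cmat"
  assumes l: "l \<in> {1..k}"
  shows "(\<Sum>x\<in>S. Gt HE k (w(l := g x)) tau X) = Gt HE k (w(l := (\<lambda>a b. \<Sum>x\<in>S. g x a b))) tau X"
proof -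
  let ?kt = "ktuples k (UNIV::'e set)"
  define R where "R n m = (if n 1 = m 1 then 1 else 0) * (\<Prod>i\<in>{1..k} - {l}. w i (n i) (m i)) * X (n k) (m k)
     * (\<Prod>i\<in>{1..<k}. T_E HE (tau i - tau (Suc i)) (n i) (m i) (n (Suc i)) (m (Suc i)))" for n m
  have "(\<Sum>x\<in>S. Gt HE k (w(l := g x)) tau X) = (\<Sum>x\<in>S. \<Sum>n\<in>?kt. \<Sum>m\<in>?kt. g x (n l) (m l) * R n m)"
    unfolding Gt_upd[OF l] R_def ..
  also have "\<dots> = (\<Sum>n\<in>?kt. \<Sum>x\<in>S. \<Sum>m\<in>?kt. g x (n l) (m l) * R n m)"
    by (rule sum.swap)
  also have "\<dots> = (\<Sum>n\<in>?kt. \<Sum>m\<in>?kt. \<Sum>x\<in>S. g x (n l) (m l) * R n m)"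
    by (rule sum.cong[OF refl], rule sum.swap)
  also have "\<dots> = (\<Sum>n\<in>?kt. \<Sum>m\<in>?kt. (\<Sum>x\<in>S. g x (n l) (m l)) * R n m)"
    by (simp only: sum_distrib_right)
  also have "\<dots> = Gt HE k (w(l := (\<lambda>a b. \<Sum>x\<in>S. g x a b))) tau X"
    unfolding Gt_upd[OF l] R_def ..
  finally show ?thesis .
qed

lemma Gr_cong:
  "(\<And>i. i \<le> k \<Longrightarrow> tau' i = tau i) \<Longrightarrow> (\<And>i. 1 \<le> i \<Longrightarrow> i \<le> k \<Longrightarrow> w' i = w i)
    \<Longrightarrow> Gr HE k w' tau' X = Gr HE k w tau X"
proof (induction k arbitrary: X)
  case 0
  then show ?case by simp
next
  case (Suc k)
  have "Gr HE k w' tau' Y = Gr HE k w tau Y" for Y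
    using Suc.prems by (intro Suc.IH) auto
  moreover have "tau' k = tau k" "tau' (Suc k) = tau (Suc k)" "w' (Suc k) = w (Suc k)"
    using Suc.prems by auto
  ultimately show ?case by simp
qed

lemma Had_one: "Had (\<lambda>a b. 1) X = X"
  by (simp add: Had_def)

lemma Gr_skip_mid:
  assumes l1: "1 \<le> l" and wl: "w l = (\<lambda>a b. 1)"
  shows "Gr HE (Suc l + d) w tau X = Gr HE (l + d) (skip_idx l w) (skip_idx l tau) X"
proof (induction d arbitrary: X)
  case 0
  obtain l' where l': "l = Suc l'" using l1 by (cases l) auto
  have "Gr HE (Suc l + 0) w tau X = Gr HE l' w tau (Uop HE (tau l' - tau l) (Had (w l) (Uop HE (tau l - tau (Suc l)) (Had (w (Suc l)) X))))"
    by (simp add: l')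
  also have "\<dots> = Gr HE l' w tau (Uop HE (tau l' - tau (Suc l)) (Had (w (Suc l)) X))"
    by (simp add: wl Had_one Uop_add)
  also have "\<dots> = Gr HE l' (skip_idx l w) (skip_idx l tau) (Uop HE (tau l' - tau (Suc l)) (Had (w (Suc l)) X))"
    by (rule Gr_cong[symmetric]) (auto simp: skip_idx_def l')
  also have "\<dots> = Gr HE (l + 0) (skip_idx l w) (skip_idx l tau) X"
    by (simp add: l' skip_idx_def)
  finally show ?case .
next
  case (Suc d)
  have "Gr HE (Suc l + Suc d) w tau X
      = Gr HE (Suc l + d) w tau (Uop HE (tau (Suc (l + d)) - tau (Suc (Suc (l + d)))) (Had (w (Suc (Suc (l + d)))) X))"
    by simp
  also have "\<dots> = Gr HE (l + d) (skip_idx l w) (skip_idx l tau) (Uop HE (tau (Suc (l + d)) - tau (Suc (Suc (l + d)))) (Had (w (Suc (Suc (l + d)))) X))"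
    by (rule Suc.IH)
  also have "\<dots> = Gr HE (l + Suc d) (skip_idx l w) (skip_idx l tau) X"
    by (simp add: skip_idx_def)
  finally show ?case .
qed

lemma Gr_skip_last:
  assumes k1: "1 \<le> k" and wk: "w k = (\<lambda>a b. 1)"
  shows "Gr HE k w tau X = Gr HE (k - 1) (skip_idx k w) (skip_idx k tau) (Uop HE (tau (k - 1) - tau k) X)"
proof -
  obtain k' where k': "k = Suc k'" using k1 by (cases k) auto
  have "Gr HE k w tau X = Gr HE k' w tau (Uop HE (tau k' - tau k) X)"
    by (simp add: k' wk[unfolded k'] Had_one)
  also have "\<dots> = Gr HE k' (skip_idx k w) (skip_idx k tau) (Uop HE (tau k' - tau k) X)"
    by (rule Gr_cong[symmetric]) (auto simp: skip_idx_def k')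
  finally show ?thesis by (simp add: k')
qed


definition rv :: "('e \<Rightarrow> real) \<Rightarrow> nat \<Rightarrow> (nat \<Rightarrow> 'e) \<Rightarrow> nat \<Rightarrow> real" where
  "rv v k n = restrict (\<lambda>l. v (n l)) {1..k}"

definition Qn :: "'e::finite cmat \<Rightarrow> 'e cmat \<Rightarrow> nat \<Rightarrow> (nat \<Rightarrow> real) \<Rightarrow> (nat \<Rightarrow> 'e) \<Rightarrow> (nat \<Rightarrow> 'e) \<Rightarrow> complex" where
  "Qn HE rhoE k tau n m = (if n 1 = m 1 then 1 else 0) * rhoE_t HE rhoE (tau k) (n k) (m k)
        * (\<Prod>l\<in>{1..<k}. T_E HE (tau l - tau (Suc l)) (n l) (m l) (n (Suc l)) (m (Suc l)))"

lemma finite_Omega_V: "finite (Omega_V (v :: 'e::finite \<Rightarrow> real))"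
  unfolding Omega_V_def by simp

lemma fibre_eq:
  assumes "xi \<in> ktuples k A"
  shows "fibre_idx v k xi = {n \<in> ktuples k UNIV. rv v k n = xi}"
proof -
  have "(\<forall>l\<in>{1..k}. v (n l) = xi l) \<longleftrightarrow> rv v k n = xi" for n
  proof
    assume "\<forall>l\<in>{1..k}. v (n l) = xi l"
    then show "rv v k n = xi" using assms unfolding rv_def ktuples_def
      by (intro ext) (auto simp: PiE_def extensional_def)
  next
    assume "rv v k n = xi"
    then show "\<forall>l\<in>{1..k}. v (n l) = xi l" unfolding rv_def by auto
  qed
  then show ?thesis unfolding fibre_idx_def by auto
qed

lemma rv_in: "rv v k ` ktuples k UNIV \<subseteq> ktuples k (Omega_V v)"
  unfolding rv_def ktuples_def Omega_V_def by auto

lemma rv_at: "l \<in> {1..k} \<Longrightarrow> rv v k n l = v (n l)"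
  unfolding rv_def by simp

lemma qsum:
  fixes HE rhoE :: "'e::finite cmat"
  shows "(\<Sum>xi\<in>ktuples k (Omega_V v). \<Sum>eta\<in>ktuples k (Omega_V v). Psi xi eta * q_E HE v rhoE k xi eta tau)
       = (\<Sum>n\<in>ktuples k UNIV. \<Sum>m\<in>ktuples k UNIV. Psi (rv v k n) (rv v k m) * Qn HE rhoE k tau n m)"
proof -
  let ?A = "ktuples k (Omega_V v)" and ?kt = "ktuples k (UNIV :: 'e set)"
  let ?H = "\<lambda>n m. Psi (rv v k n) (rv v k m) * Qn HE rhoE k tau n m"
  have fA: "finite ?A" by (intro finite_ktuples finite_Omega_V)
  have fkt: "finite ?kt" by (intro finite_ktuples) simp
  have "(\<Sum>xi\<in>?A. \<Sum>eta\<in>?A. Psi xi eta * q_E HE v rhoE k xi eta tau)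
      = (\<Sum>xi\<in>?A. \<Sum>eta\<in>?A. \<Sum>n\<in>{n \<in> ?kt. rv v k n = xi}. \<Sum>m\<in>{m \<in> ?kt. rv v k m = eta}. ?H n m)"
  proof (intro sum.cong refl)
    fix xi eta assume xi: "xi \<in> ?A" and eta: "eta \<in> ?A"
    have "Psi xi eta * q_E HE v rhoE k xi eta tau
       = (\<Sum>n\<in>{n \<in> ?kt. rv v k n = xi}. \<Sum>m\<in>{m \<in> ?kt. rv v k m = eta}. Psi xi eta * Qn HE rhoE k tau n m)"
      unfolding q_E_def fibre_eq[OF xi] fibre_eq[OF eta] Qn_def by (simp add: sum_distrib_left mult_ac)
    also have "\<dots> = (\<Sum>n\<in>{n \<in> ?kt. rv v k n = xi}. \<Sum>m\<in>{m \<in> ?kt. rv v k m = eta}. ?H n m)"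
      by (intro sum.cong refl) auto
    finally show "Psi xi eta * q_E HE v rhoE k xi eta tau
       = (\<Sum>n\<in>{n \<in> ?kt. rv v k n = xi}. \<Sum>m\<in>{m \<in> ?kt. rv v k m = eta}. ?H n m)" .
  qed
  also have "\<dots> = (\<Sum>xi\<in>?A. \<Sum>n\<in>{n \<in> ?kt. rv v k n = xi}. \<Sum>eta\<in>?A. \<Sum>m\<in>{m \<in> ?kt. rv v k m = eta}. ?H n m)"
    by (rule sum.cong[OF refl], rule sum.swap)
  also have "\<dots> = (\<Sum>xi\<in>?A. \<Sum>n\<in>{n \<in> ?kt. rv v k n = xi}. \<Sum>m\<in>?kt. ?H n m)"
    by (intro sum.cong refl sum.group fA fkt rv_in)
  also have "\<dots> = (\<Sum>n\<in>?kt. \<Sum>m\<in>?kt. ?H n m)"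
    by (intro sum.group fA fkt rv_in)
  finally show ?thesis .
qed

lemma prod_indicator:
  "finite S \<Longrightarrow> (\<Prod>l\<in>S. if P l then 1 else 0 :: complex) = (if \<forall>l\<in>S. P l then 1 else 0)"
  by (induction S rule: finite_induct) auto

definition wavg :: "('e \<Rightarrow> real) \<Rightarrow> nat \<Rightarrow> 'e \<Rightarrow> 'e \<Rightarrow> complex" where
  "wavg v l x y = complex_of_real ((v x + v y) / 2)"

definition chi :: "('e \<Rightarrow> real) \<Rightarrow> (nat \<Rightarrow> real) \<Rightarrow> nat \<Rightarrow> 'e \<Rightarrow> 'e \<Rightarrow> complex" where
  "chi v phi l x y = (if 2 * phi l = v x + v y then 1 else 0)"

lemma F_Gt:
  fixes HE rhoE :: "'e::finite cmat"
  assumes k: "1 \<le> k"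
  shows "F_k HE v rhoE k tau = Gt HE k (wavg v) tau (rhoE_t HE rhoE (tau k))"
proof -
  obtain k' where k': "k = Suc k'" using k by (cases k) auto
  let ?Psi = "\<lambda>xi eta. (if xi 1 = eta 1 then 1 else 0) * complex_of_real (\<Prod>l\<in>{1..k}. (xi l + eta l) / 2)"
  have "F_k HE v rhoE k tau = (\<Sum>xi\<in>ktuples k (Omega_V v). \<Sum>eta\<in>ktuples k (Omega_V v). ?Psi xi eta * q_E HE v rhoE k xi eta tau)"
    unfolding k' by simp
  also have "\<dots> = (\<Sum>n\<in>ktuples k UNIV. \<Sum>m\<in>ktuples k UNIV. ?Psi (rv v k n) (rv v k m) * Qn HE rhoE k tau n m)"
    by (rule qsum)
  also have "\<dots> = Gt HE k (wavg v) tau (rhoE_t HE rhoE (tau k))"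
    unfolding Gt_def
  proof (intro sum.cong refl)
    fix n m :: "nat \<Rightarrow> 'e"
    have 1: "1 \<in> {1..k}" using k by simp
    have p: "complex_of_real (\<Prod>l\<in>{1..k}. (rv v k n l + rv v k m l) / 2) = (\<Prod>l\<in>{1..k}. wavg v l (n l) (m l))"
      unfolding of_real_prod wavg_def by (intro prod.cong refl) (simp add: rv_at)
    show "?Psi (rv v k n) (rv v k m) * Qn HE rhoE k tau n m
        = (if n 1 = m 1 then 1 else 0) * (\<Prod>l\<in>{1..k}. wavg v l (n l) (m l)) * rhoE_t HE rhoE (tau k) (n k) (m k)
          * (\<Prod>l\<in>{1..<k}. T_E HE (tau l - tau (Suc l)) (n l) (m l) (n (Suc l)) (m (Suc l)))"
      unfolding p Qn_def rv_at[OF 1] by simp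
  qed
  finally show ?thesis .
qed

lemma f_Gt:
  fixes HE rhoE :: "'e::finite cmat"
  assumes k: "1 \<le> k"
  shows "f_k HE v rhoE k phi tau = Gt HE k (chi v phi) tau (rhoE_t HE rhoE (tau k))"
proof -
  let ?A = "ktuples k (Omega_V v)"
  let ?C = "\<lambda>xi eta. \<forall>l\<in>{1..k}. 2 * phi l = xi l + eta l"
  let ?Psi = "\<lambda>xi eta. if ?C xi eta then (if xi 1 = eta 1 then 1 else 0) else (0::complex)"
  have fA: "finite ?A" by (intro finite_ktuples finite_Omega_V)
  have S: "{(xi, eta) \<in> ?A \<times> ?A. ?C xi eta} = {p \<in> ?A \<times> ?A. ?C (fst p) (snd p)}" by auto
  have "f_k HE v rhoE k phi tau
      = (\<Sum>p\<in>{p \<in> ?A \<times> ?A. ?C (fst p) (snd p)}. (if fst p 1 = snd p 1 then 1 else 0) * q_E HE v rhoE k (fst p) (snd p) tau)"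
    unfolding f_k_def S by (simp add: case_prod_beta)
  also have "\<dots> = (\<Sum>p\<in>?A \<times> ?A. if ?C (fst p) (snd p) then (if fst p 1 = snd p 1 then 1 else 0) * q_E HE v rhoE k (fst p) (snd p) tau else 0)"
    by (rule sum.inter_filter) (simp add: fA)
  also have "\<dots> = (\<Sum>xi\<in>?A. \<Sum>eta\<in>?A. ?Psi xi eta * q_E HE v rhoE k xi eta tau)"
    unfolding sum.cartesian_product' by (intro sum.cong refl) simp
  also have "\<dots> = (\<Sum>n\<in>ktuples k UNIV. \<Sum>m\<in>ktuples k UNIV. ?Psi (rv v k n) (rv v k m) * Qn HE rhoE k tau n m)"
    by (rule qsum)
  also have "\<dots> = Gt HE k (chi v phi) tau (rhoE_t HE rhoE (tau k))"
    unfolding Gt_def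
  proof (intro sum.cong refl)
    fix n m :: "nat \<Rightarrow> 'e"
    have 1: "1 \<in> {1..k}" using k by simp
    have p: "(\<Prod>l\<in>{1..k}. chi v phi l (n l) (m l)) = (if ?C (rv v k n) (rv v k m) then 1 else 0)"
      unfolding chi_def by (simp add: prod_indicator rv_at)
    show "?Psi (rv v k n) (rv v k m) * Qn HE rhoE k tau n m
        = (if n 1 = m 1 then 1 else 0) * (\<Prod>l\<in>{1..k}. chi v phi l (n l) (m l)) * rhoE_t HE rhoE (tau k) (n k) (m k)
          * (\<Prod>l\<in>{1..<k}. T_E HE (tau l - tau (Suc l)) (n l) (m l) (n (Suc l)) (m (Suc l)))"
      unfolding p Qn_def rv_at[OF 1] by simp
  qed
  finally show ?thesis .
qed


lemma f_k_sum:
  fixes HE rhoE :: "'e::finite cmat"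
  shows "f_k HE v rhoE k phi tau = (\<Sum>xi\<in>ktuples k (Omega_V v). \<Sum>eta\<in>ktuples k (Omega_V v).
     (if \<forall>l\<in>{1..k}. 2 * phi l = xi l + eta l then (if xi 1 = eta 1 then 1 else 0) else 0) * q_E HE v rhoE k xi eta tau)"
proof -
  let ?A = "ktuples k (Omega_V v)"
  let ?C = "\<lambda>xi eta. \<forall>l\<in>{1..k}. 2 * phi l = xi l + eta l"
  have fA: "finite ?A" by (intro finite_ktuples finite_Omega_V)
  have S: "{(xi, eta) \<in> ?A \<times> ?A. ?C xi eta} = {p \<in> ?A \<times> ?A. ?C (fst p) (snd p)}" by auto
  have "f_k HE v rhoE k phi tau
      = (\<Sum>p\<in>{p \<in> ?A \<times> ?A. ?C (fst p) (snd p)}. (if fst p 1 = snd p 1 then 1 else 0) * q_E HE v rhoE k (fst p) (snd p) tau)"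
    unfolding f_k_def S by (simp add: case_prod_beta)
  also have "\<dots> = (\<Sum>p\<in>?A \<times> ?A. if ?C (fst p) (snd p) then (if fst p 1 = snd p 1 then 1 else 0) * q_E HE v rhoE k (fst p) (snd p) tau else 0)"
    by (rule sum.inter_filter) (simp add: fA)
  also have "\<dots> = (\<Sum>xi\<in>?A. \<Sum>eta\<in>?A. (if ?C xi eta then (if xi 1 = eta 1 then 1 else 0) else 0) * q_E HE v rhoE k xi eta tau)"
    unfolding sum.cartesian_product' by (intro sum.cong refl) simp
  finally show ?thesis .
qed

lemma finite_Omega_VV: "finite (Omega_VV (v :: 'e::finite \<Rightarrow> real))"
  unfolding Omega_VV_def by (intro finite_image_set2) (simp_all add: finite_Omega_V)

lemma part2:
  fixes HE rhoE :: "'e::finite cmat"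
  assumes k: "1 \<le> k"
  shows "F_k HE v rhoE k tau =
    (\<Sum>phi\<in>ktuples k (Omega_VV v). complex_of_real (\<Prod>l\<in>{1..k}. phi l) * f_k HE v rhoE k phi tau)"
proof -
  obtain k' where k': "k = Suc k'" using k by (cases k) auto
  let ?A = "ktuples k (Omega_V v)" and ?P = "ktuples k (Omega_VV v)"
  let ?C = "\<lambda>phi xi eta. \<forall>l\<in>{1..k}. 2 * phi l = xi l + eta l"
  let ?d = "\<lambda>xi eta. (if xi 1 = eta 1 then 1 else 0 :: complex)"
  let ?q = "\<lambda>xi eta. q_E HE v rhoE k xi eta tau"
  have "(\<Sum>phi\<in>?P. complex_of_real (\<Prod>l\<in>{1..k}. phi l) * f_k HE v rhoE k phi tau)
      = (\<Sum>phi\<in>?P. \<Sum>xi\<in>?A. \<Sum>eta\<in>?A. (if ?C phi xi eta then complex_of_real (\<Prod>l\<in>{1..k}. phi l) * ?d xi eta * ?q xi eta else 0))"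
    unfolding f_k_sum sum_distrib_left by (intro sum.cong refl) simp
  also have "\<dots> = (\<Sum>xi\<in>?A. \<Sum>eta\<in>?A. \<Sum>phi\<in>?P. (if ?C phi xi eta then complex_of_real (\<Prod>l\<in>{1..k}. phi l) * ?d xi eta * ?q xi eta else 0))"
    by (subst sum.swap, rule sum.cong[OF refl], rule sum.swap)
  also have "\<dots> = (\<Sum>xi\<in>?A. \<Sum>eta\<in>?A. ?d xi eta * complex_of_real (\<Prod>l\<in>{1..k}. (xi l + eta l) / 2) * ?q xi eta)"
  proof (intro sum.cong refl)
    fix xi eta assume xi: "xi \<in> ?A" and eta: "eta \<in> ?A"
    define phi0 where "phi0 = restrict (\<lambda>l. (xi l + eta l) / 2) {1..k}"
    have p0: "phi0 \<in> ?P"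
      unfolding phi0_def ktuples_def Omega_VV_def
    proof (intro restrict_PiE_iff[THEN iffD2] ballI)
      fix l assume "l \<in> {1..k}"
      then have "xi l \<in> Omega_V v" "eta l \<in> Omega_V v" using xi eta ktuples_mem by blast+
      then show "(xi l + eta l) / 2 \<in> {(x + y) / 2 |x y. x \<in> Omega_V v \<and> y \<in> Omega_V v}" by blast
    qed
    have iff: "?C phi xi eta \<longleftrightarrow> phi = phi0" if "phi \<in> ?P" for phi
    proof
      assume C: "?C phi xi eta"
      show "phi = phi0"
      proof (rule ext)
        fix x
        show "phi x = phi0 x"
        proof (cases "x \<in> {1..k}")
          case True
          then have "2 * phi x = xi x + eta x" using C by blast
          then show ?thesis using True unfolding phi0_def by simp
        next
          case False
          then show ?thesis using that unfolding phi0_def ktuples_def by (auto simp: PiE_def extensional_def)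
        qed
      qed
    next
      assume "phi = phi0"
      then show "?C phi xi eta" unfolding phi0_def by simp
    qed
    have "(\<Sum>phi\<in>?P. (if ?C phi xi eta then complex_of_real (\<Prod>l\<in>{1..k}. phi l) * ?d xi eta * ?q xi eta else 0))
        = (\<Sum>phi\<in>?P. (if phi = phi0 then complex_of_real (\<Prod>l\<in>{1..k}. phi l) * ?d xi eta * ?q xi eta else 0))"
      by (intro sum.cong refl) (simp only: iff)
    also have "\<dots> = complex_of_real (\<Prod>l\<in>{1..k}. phi0 l) * ?d xi eta * ?q xi eta"
      using p0 by (subst sum.delta) (simp_all add: finite_ktuples finite_Omega_VV)
    also have "(\<Prod>l\<in>{1..k}. phi0 l) = (\<Prod>l\<in>{1..k}. (xi l + eta l) / 2)"
      unfolding phi0_def by (intro prod.cong) auto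
    finally show "(\<Sum>phi\<in>?P. (if ?C phi xi eta then complex_of_real (\<Prod>l\<in>{1..k}. phi l) * ?d xi eta * ?q xi eta else 0))
        = ?d xi eta * complex_of_real (\<Prod>l\<in>{1..k}. (xi l + eta l) / 2) * ?q xi eta"
      by (simp add: mult_ac)
  qed
  also have "\<dots> = F_k HE v rhoE k tau"
    unfolding k' by simp
  finally show ?thesis ..
qed

lemma part3:
  fixes HE rhoE :: "'e::finite cmat"
  assumes herm: "hermitian HE" and k: "2 \<le> k" and l: "l \<in> {1..k}"
  shows "(\<Sum>x\<in>Omega_VV v. f_k HE v rhoE k (phi(l := x)) tau) = f_k HE v rhoE (k - 1) (skip_idx l phi) (skip_idx l tau)"
proof -
  define X where "X = rhoE_t HE rhoE (tau k)"
  define g where "g x a b = (if 2 * x = v a + v b then 1 else (0::complex))" for x a b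
  define w where "w = (chi v phi)(l := (\<lambda>a b. 1))"
  have k1: "1 \<le> k" "1 \<le> k - 1" using k by auto
  have fin: "finite (Omega_VV v)"
    unfolding Omega_VV_def by (intro finite_image_set2) (simp_all add: finite_Omega_V)
  have chi_upd: "chi v (phi(l := x)) = (chi v phi)(l := g x)" for x
    unfolding chi_def g_def by (intro ext) auto
  have gsum: "(\<lambda>a b. \<Sum>x\<in>Omega_VV v. g x a b) = (\<lambda>a b. 1)"
  proof (intro ext)
    fix a b
    have "(\<Sum>x\<in>Omega_VV v. g x a b) = (\<Sum>x\<in>Omega_VV v. if x = (v a + v b) / 2 then 1 else 0)"
      unfolding g_def by (intro sum.cong refl) auto
    also have "\<dots> = 1"
    proof -
      have "(v a + v b) / 2 \<in> Omega_VV v" unfolding Omega_VV_def Omega_V_def by auto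
      then show ?thesis by (subst sum.delta[OF fin]) simp
    qed
    finally show "(\<Sum>x\<in>Omega_VV v. g x a b) = 1" .
  qed
  have "(\<Sum>x\<in>Omega_VV v. f_k HE v rhoE k (phi(l := x)) tau) = (\<Sum>x\<in>Omega_VV v. Gt HE k ((chi v phi)(l := g x)) tau X)"
    unfolding f_Gt[OF k1(1)] chi_upd X_def ..
  also have "\<dots> = Gt HE k w tau X"
    unfolding Gt_pos[OF l] gsum w_def ..
  also have "\<dots> = Gr HE k w tau X"
    by (rule GtGr[OF herm k1(1)])
  also have "\<dots> = Gr HE (k - 1) (skip_idx l w) (skip_idx l tau) (rhoE_t HE rhoE (skip_idx l tau (k - 1)))"
  proof (cases "l < k")
    case True
    define d where "d = k - Suc l"
    have kd: "k = Suc l + d" "k - 1 = l + d" using True unfolding d_def by auto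
    have wl: "w l = (\<lambda>a b. 1)" unfolding w_def by simp
    have "Gr HE k w tau X = Gr HE (k - 1) (skip_idx l w) (skip_idx l tau) X"
      unfolding kd using Gr_skip_mid[of l w] l wl by simp
    moreover have "skip_idx l tau (k - 1) = tau k" using True k by (auto simp: skip_idx_def)
    ultimately show ?thesis unfolding X_def by simp
  next
    case False
    then have lk: "l = k" using l by simp
    have wk: "w k = (\<lambda>a b. 1)" unfolding w_def lk by simp
    have "Gr HE k w tau X = Gr HE (k - 1) (skip_idx k w) (skip_idx k tau) (Uop HE (tau (k - 1) - tau k) X)"
      by (rule Gr_skip_last) (use k1 wk in auto)
    moreover have "Uop HE (tau (k - 1) - tau k) X = rhoE_t HE rhoE (tau (k - 1))"
      unfolding X_def rhoE_t_Uop Uop_add by simp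
    moreover have "skip_idx k tau (k - 1) = tau (k - 1)" using k by (simp add: skip_idx_def)
    ultimately show ?thesis unfolding lk by simp
  qed
  also have "\<dots> = Gt HE (k - 1) (skip_idx l w) (skip_idx l tau) (rhoE_t HE rhoE (skip_idx l tau (k - 1)))"
    by (rule GtGr[OF herm k1(2), symmetric])
  also have "skip_idx l w = chi v (skip_idx l phi)"
    unfolding w_def skip_idx_def chi_def by (intro ext) auto
  also have "Gt HE (k - 1) (chi v (skip_idx l phi)) (skip_idx l tau) (rhoE_t HE rhoE (skip_idx l tau (k - 1)))
      = f_k HE v rhoE (k - 1) (skip_idx l phi) (skip_idx l tau)"
    by (rule f_Gt[OF k1(2), symmetric])
  finally show ?thesis .
qed


definition sg :: "bool \<Rightarrow> complex" where "sg a = (if a then 1/2 else -1/2)"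

definition Hb :: "('e \<Rightarrow> real) \<Rightarrow> 'e cmat \<Rightarrow> bool \<Rightarrow> 'e cmat" where
  "Hb v HE a = madd (msmult (sg a) (diag_op v)) HE"

lemma VS_entry: "msmult (1/2) sigma_z a c = (if a = c then sg a else 0)"
  unfolding msmult_def sigma_z_def sg_def by simp

lemma H_block:
  "msmult c (H_SE (\<lambda>a b. 0) (msmult (1/2) sigma_z) (diag_op v) HE) (a, x) (b, y)
     = (if a = b then msmult c (Hb v HE a) x y else 0)"
  unfolding H_SE_def madd_def tensor_def msmult_def Hb_def mid_def sigma_z_def sg_def
  by (auto simp: algebra_simps)

lemma mpow_block:
  fixes M :: "('a::finite \<times> 'e::finite) cmat"
  assumes M: "\<And>a x b y. M (a, x) (b, y) = (if a = b then B a x y else 0)"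
  shows "mpow M n (a, x) (b, y) = (if a = b then mpow (B a) n x y else 0)"
proof (induction n arbitrary: a x b y)
  case 0
  then show ?case by (simp add: mid_def)
next
  case (Suc n)
  have "mpow M (Suc n) (a, x) (b, y) = (\<Sum>c\<in>UNIV. \<Sum>z\<in>UNIV. M (a, x) (c, z) * mpow M n (c, z) (b, y))"
    by (simp add: mmult_def sum_UNIV_prod)
  also have "\<dots> = (\<Sum>c\<in>UNIV. \<Sum>z\<in>UNIV. if c = a then B a x z * (if a = b then mpow (B a) n z y else 0) else 0)"
    unfolding M Suc.IH by (intro sum.cong refl) auto
  also have "\<dots> = (\<Sum>z\<in>UNIV. B a x z * (if a = b then mpow (B a) n z y else 0))"
    by (subst sum.swap) (simp only: sum.delta finite UNIV_I if_True)
  also have "\<dots> = (if a = b then mpow (B a) (Suc n) x y else 0)"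
    by (simp add: mmult_def)
  finally show ?case .
qed

lemma mexp_block:
  fixes M :: "('a::finite \<times> 'e::finite) cmat"
  assumes M: "\<And>a x b y. M (a, x) (b, y) = (if a = b then B a x y else 0)"
  shows "mexp M (a, x) (b, y) = (if a = b then mexp (B a) x y else 0)"
  unfolding mexp_def mpow_block[OF M] by (cases "a = b") simp_all

lemma mexp_zero_mat: "mexp (\<lambda>a b. 0 :: complex) = (mid :: 'a::finite cmat)"
proof -
  have "Mk (\<lambda>a b. 0 :: complex) = (0 :: 'a sqm)" by (rule sqm_eqI) simp
  then show ?thesis by (simp add: mexp_ent ent_one)
qed

lemma reduced_eq:
  fixes rhoS :: "bool cmat" and HE rhoE :: "'e::finite cmat"
  shows "reduced_interaction_state (\<lambda>a b. 0) (msmult (1/2) sigma_z) (diag_op v) HE rhoS rhoE t a b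
     = rhoS a b * mtr (mmult (mmult (U_E (Hb v HE a) t) rhoE) (U_E (Hb v HE b) (-t)))"
proof -
  let ?H = "H_SE (\<lambda>a b. 0) (msmult (1/2) sigma_z) (diag_op v) HE"
  define E1 where "E1 = mexp (msmult (- \<i> * of_real t) ?H)"
  define E2 where "E2 = mexp (msmult (\<i> * of_real t) ?H)"
  define e1 where "e1 a = U_E (Hb v HE a) t" for a
  define e2 where "e2 a = U_E (Hb v HE a) (-t)" for a
  have E1: "E1 (a, x) (b, y) = (if a = b then e1 a x y else 0)" for a x b y
    unfolding E1_def e1_def U_E_def by (rule mexp_block) (rule H_block)
  have E2: "E2 (a, x) (b, y) = (if a = b then e2 a x y else 0)" for a x b y
    unfolding E2_def e2_def U_neg_form[symmetric] by (rule mexp_block) (rule H_block)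
  have hs: "msmult c (\<lambda>a b. 0 :: complex) = (\<lambda>a b. 0)" for c by (simp add: msmult_def)
  have M1: "mmult E1 (tensor rhoS rhoE) (a, n) (d, w) = rhoS a d * mmult (e1 a) rhoE n w" for a n d w
  proof -
    have "mmult E1 (tensor rhoS rhoE) (a, n) (d, w) = (\<Sum>c\<in>UNIV. \<Sum>z\<in>UNIV. if c = a then e1 a n z * (rhoS a d * rhoE z w) else 0)"
      unfolding mmult_def sum_UNIV_prod E1 tensor_def by (intro sum.cong refl) auto
    also have "\<dots> = (\<Sum>z\<in>UNIV. e1 a n z * (rhoS a d * rhoE z w))"
      by (subst sum.swap) (simp add: sum.delta)
    finally show ?thesis by (simp add: mmult_def sum_distrib_left mult_ac)
  qed
  have M2: "mmult (mmult E1 (tensor rhoS rhoE)) E2 (a, n) (b, m) = rhoS a b * mmult (mmult (e1 a) rhoE) (e2 b) n m" for a n b m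
  proof -
    have "mmult (mmult E1 (tensor rhoS rhoE)) E2 (a, n) (b, m)
        = (\<Sum>d\<in>UNIV. \<Sum>w\<in>UNIV. if d = b then rhoS a b * mmult (e1 a) rhoE n w * e2 b w m else 0)"
      unfolding mmult_def[of "mmult E1 _" E2] sum_UNIV_prod M1 E2 by (intro sum.cong refl) auto
    also have "\<dots> = (\<Sum>w\<in>UNIV. rhoS a b * mmult (e1 a) rhoE n w * e2 b w m)"
      by (subst sum.swap) (simp only: sum.delta finite UNIV_I if_True)
    finally show ?thesis by (simp add: mmult_def[of "mmult (e1 a) rhoE"] sum_distrib_left mult_ac)
  qed
  have R: "reduced_interaction_state (\<lambda>a b. 0) (msmult (1/2) sigma_z) (diag_op v) HE rhoS rhoE t
      = ptrace_E (mmult (mmult E1 (tensor rhoS rhoE)) E2)"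
    unfolding reduced_interaction_state_def E1_def E2_def Let_def hs mexp_zero_mat by simp
  have P: "ptrace_E (mmult (mmult E1 (tensor rhoS rhoE)) E2) a b = rhoS a b * mtr (mmult (mmult (e1 a) rhoE) (e2 b))"
    unfolding ptrace_E_def M2 mtr_def by (simp add: sum_distrib_left)
  show ?thesis unfolding R P e1_def e2_def ..
qed

lemma VS_t_eq: "VS_t (\<lambda>a b. 0) VS s = VS"
proof -
  have hs: "msmult c (\<lambda>a b. 0 :: complex) = (\<lambda>a b. 0)" for c by (simp add: msmult_def)
  show ?thesis unfolding VS_t_def hs mexp_zero_mat by simp
qed

lemma calV_entry: "calV (\<lambda>a b. 0) (msmult (1/2) sigma_z) s A a b = (sg a - sg b) * A a b"
proof -
  have l: "mmult (msmult (1/2) sigma_z) A a b = sg a * A a b"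
    unfolding mmult_def VS_entry by (simp add: if_distrib[of "\<lambda>x. x * _"] cong: if_cong)
  have r: "mmult A (msmult (1/2) sigma_z) a b = A a b * sg b"
    unfolding mmult_def VS_entry by (simp add: if_distrib[of "\<lambda>x. _ * x"] cong: if_cong)
  show ?thesis unfolding calV_def VS_t_eq mminus_def l r by (simp add: algebra_simps)
qed

lemma vcomp_entry: "vcomp (\<lambda>a b. 0) (msmult (1/2) sigma_z) k tau A a b = (sg a - sg b) ^ k * A a b"
proof (induction k arbitrary: A)
  case 0
  then show ?case by simp
next
  case (Suc k)
  then show ?case by (simp add: calV_entry)
qed


lemma integral_cmult_c:
  fixes f :: "'n::euclidean_space \<Rightarrow> complex"
  shows "integral S (\<lambda>x. c * f x) = c * integral S f"
proof (cases "c = 0")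
  case True
  then show ?thesis by simp
next
  case c: False
  show ?thesis
  proof (cases "f integrable_on S")
    case True
    have "integral S ((\<lambda>z. c * z) \<circ> f) = c * integral S f"
      by (rule integral_linear[OF True bounded_linear_mult_right])
    then show ?thesis by (simp add: o_def)
  next
    case False
    have "\<not> (\<lambda>x. c * f x) integrable_on S"
    proof
      assume "(\<lambda>x. c * f x) integrable_on S"
      then have "((\<lambda>z. inverse c * z) \<circ> (\<lambda>x. c * f x)) integrable_on S"
        by (rule integrable_linear[OF _ bounded_linear_mult_right])
      then have "f integrable_on S" using c by (simp add: o_def)
      then show False using False by simp
    qed
    then show ?thesis using False by (simp add: not_integrable_integral)
  qed
qed

lemma nint_scale: "nint r j s tau (\<lambda>tau. c * g tau) = c * nint r j s tau g"
  by (induction r arbitrary: j s tau) (simp_all add: integral_cmult_c)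

lemma nint_zero: "nint r j s tau (\<lambda>_. 0) = 0"
  by (induction r arbitrary: j s tau) simp_all

lemma L_split:
  "Lmul (KE (Hb v HE a)) + Rmul (- KE (Hb v HE b)) = L0 HE + HadS (\<lambda>n m. - \<i> * (sg a * v n - sg b * v m))"
proof (rule sapp_inj)
  fix X
  show "sapp (Lmul (KE (Hb v HE a)) + Rmul (- KE (Hb v HE b))) X = sapp (L0 HE + HadS (\<lambda>n m. - \<i> * (sg a * v n - sg b * v m))) X"
  proof (intro ext)
    fix n m
    have l: "mmult (ent (KE (Hb v HE a))) X n m = - \<i> * sg a * v n * X n m + mmult (ent (KE HE)) X n m"
    proof -
      have "mmult (ent (KE (Hb v HE a))) X n m
          = (\<Sum>z\<in>UNIV. (if z = n then - \<i> * sg a * v n * X n m else 0) + ent (KE HE) n z * X z m)"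
        unfolding mmult_def KE_def Hb_def by (intro sum.cong refl) (auto simp: msmult_def madd_def diag_op_def algebra_simps)
      then show ?thesis by (simp add: sum.distrib mmult_def)
    qed
    have r: "mmult X (ent (- KE (Hb v HE b))) n m = \<i> * sg b * v m * X n m + mmult X (ent (- KE HE)) n m"
    proof -
      have "mmult X (ent (- KE (Hb v HE b))) n m
          = (\<Sum>z\<in>UNIV. (if z = m then \<i> * sg b * v m * X n m else 0) + X n z * ent (- KE HE) z m)"
        unfolding mmult_def KE_def Hb_def by (intro sum.cong refl) (auto simp: msmult_def madd_def diag_op_def algebra_simps)
      then show ?thesis by (simp add: sum.distrib sum_subtractf sum_negf mmult_def)
    qed
    show "sapp (Lmul (KE (Hb v HE a)) + Rmul (- KE (Hb v HE b))) X n m = sapp (L0 HE + HadS (\<lambda>n m. - \<i> * (sg a * v n - sg b * v m))) X n m"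
      unfolding sapp_add sapp_Lmul sapp_Rmul L0_def sapp_HadS Had_def l r by (simp add: algebra_simps)
  qed
qed

lemma linear_psi:
  fixes rhoE :: "'e::finite cmat"
  shows "linear (\<lambda>S. c * mtr (sapp S rhoE))"
proof (rule linearI)
  fix S T :: "('e::finite \<times> 'e) sqm" and r :: real
  show "c * mtr (sapp (S + T) rhoE) = c * mtr (sapp S rhoE) + c * mtr (sapp T rhoE)"
    unfolding sapp_add mtr_def by (simp add: sum.distrib distrib_left)
  show "c * mtr (sapp (r *\<^sub>R S) rhoE) = r *\<^sub>R (c * mtr (sapp S rhoE))"
    unfolding sapp_scaleR mtr_def by (simp add: scaleR_conv_of_real sum_distrib_left mult_ac)
qed

lemma part1_off:
  fixes HE rhoE :: "'e::finite cmat" and rhoS :: "bool cmat"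
  assumes herm: "hermitian HE" and tr1: "mtr rhoE = 1" and t: "0 \<le> t" and ab: "a \<noteq> b"
  shows "(\<lambda>k. (- \<i>) ^ k * nint k 1 t (\<lambda>_. 0)
      (\<lambda>tau. F_k HE v rhoE k tau * vcomp (\<lambda>a b. 0) (msmult (1/2) sigma_z) k tau rhoS a b))
    sums (rhoS a b * mtr (mmult (mmult (U_E (Hb v HE a) t) rhoE) (U_E (Hb v HE b) (-t))))"
proof -
  define d where "d = sg a - sg b"
  define cw where "cw = (\<lambda>n m. - \<i> * (sg a * v n - sg b * v m))"
  define A0 where "A0 = L0 HE"
  define B0 where "B0 = HadS cw"
  define psi where "psi = (\<lambda>S. rhoS a b * mtr (sapp S rhoE))"
  have sgb: "sg b = - sg a" using ab unfolding sg_def by (cases a; cases b) auto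
  have cw_eq: "(\<lambda>_::nat. cw) = (\<lambda>l x y. (- \<i> * d) * wavg v l x y)"
    unfolding cw_def d_def wavg_def sgb by (intro ext) (simp add: algebra_simps)
  have bl: "bounded_linear psi" unfolding psi_def by (intro linear_bounded_sqm linear_psi)
  have Lt: "Lmul (KE (Hb v HE a)) + Rmul (- KE (Hb v HE b)) = A0 + B0"
    unfolding A0_def B0_def cw_def by (rule L_split)
  have lhs: "rhoS a b * mtr (mmult (mmult (U_E (Hb v HE a) t) rhoE) (U_E (Hb v HE b) (-t))) = psi (exp (t *\<^sub>R (A0 + B0)))"
  proof -
    have "U_E (Hb v HE b) (-t) = ent (exp (t *\<^sub>R (- KE (Hb v HE b))))"
      unfolding U_exp by simp
    then have "mmult (mmult (U_E (Hb v HE a) t) rhoE) (U_E (Hb v HE b) (-t)) = sapp (exp (t *\<^sub>R (A0 + B0))) rhoE"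
      unfolding Lt[symmetric] sapp_exp_LR U_exp by simp
    then show ?thesis unfolding psi_def by simp
  qed
  have W: "exp (t *\<^sub>R (A0 + B0)) = exp (t *\<^sub>R A0) * Wd A0 B0 t"
    unfolding Wd_def mult.assoc[symmetric] exp_scale_inv by simp
  have psiW: "psi (exp (t *\<^sub>R (A0 + B0))) = psi (Wd A0 B0 t)"
  proof -
    have "psi (exp (t *\<^sub>R (A0 + B0))) = psi (exp (t *\<^sub>R A0) * Wd A0 B0 t)" using W by simp
    also have "\<dots> = rhoS a b * mtr (Uop HE t (sapp (Wd A0 B0 t) rhoE))"
      unfolding psi_def sapp_mult A0_def sapp_expL0 ..
    also have "\<dots> = psi (Wd A0 B0 t)" unfolding psi_def mtr_Uop ..
    finally show ?thesis .
  qed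
  have sums: "(\<lambda>k. psi (Iseq A0 B0 k t)) sums psi (Wd A0 B0 t)"
    by (rule bounded_linear.sums[OF bl dyson_sums[OF t]])
  have trm: "psi (Iseq A0 B0 k t) = (- \<i>) ^ k * nint k 1 t (\<lambda>_. 0)
      (\<lambda>tau. F_k HE v rhoE k tau * vcomp (\<lambda>a b. 0) (msmult (1/2) sigma_z) k tau rhoS a b)" for k
  proof -
    have "nint k 1 t (\<lambda>_. 0) (\<lambda>tau. psi (oprod A0 B0 k tau)) = psi (oprod A0 B0 (1 - 1) (\<lambda>_. 0) * Iseq A0 B0 k t)"
      by (rule nint_bridge[OF bl]) (use t in auto)
    then have b: "psi (Iseq A0 B0 k t) = nint k 1 t (\<lambda>_. 0) (\<lambda>tau. psi (oprod A0 B0 k tau))" by simp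
    have o: "psi (oprod A0 B0 k tau) = (- \<i>) ^ k * (F_k HE v rhoE k tau * vcomp (\<lambda>a b. 0) (msmult (1/2) sigma_z) k tau rhoS a b)" for tau
    proof -
      have g: "Gr HE k (wavg v) tau (Uop HE (tau k) rhoE) = F_k HE v rhoE k tau"
      proof (cases "k = 0")
        case True
        then show ?thesis by (simp add: mtr_Uop tr1)
      next
        case False
        then have "1 \<le> k" by simp
        then show ?thesis unfolding F_Gt[OF \<open>1 \<le> k\<close>] rhoE_t_Uop by (rule GtGr[OF herm, symmetric])
      qed
      have "psi (oprod A0 B0 k tau) = rhoS a b * Gr HE k (\<lambda>_. cw) tau (Uop HE (tau k) rhoE)"
        unfolding psi_def A0_def B0_def tr_oprod ..
      also have "\<dots> = rhoS a b * ((- \<i> * d) ^ k * F_k HE v rhoE k tau)"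
        unfolding cw_eq Gr_wscale g ..
      also have "\<dots> = (- \<i>) ^ k * (F_k HE v rhoE k tau * (d ^ k * rhoS a b))"
        unfolding power_mult_distrib by (simp only: mult_ac)
      finally show ?thesis unfolding vcomp_entry d_def .
    qed
    show ?thesis unfolding b o nint_scale ..
  qed
  show ?thesis using sums unfolding trm lhs psiW .
qed

lemma part1_diag:
  fixes HE rhoE :: "'e::finite cmat" and rhoS :: "bool cmat"
  assumes tr1: "mtr rhoE = 1"
  shows "(\<lambda>k. (- \<i>) ^ k * nint k 1 t (\<lambda>_. 0)
      (\<lambda>tau. F_k HE v rhoE k tau * vcomp (\<lambda>a b. 0) (msmult (1/2) sigma_z) k tau rhoS a a))
    sums (rhoS a a * mtr (mmult (mmult (U_E (Hb v HE a) t) rhoE) (U_E (Hb v HE a) (-t))))"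
proof -
  have f: "(\<lambda>k. (- \<i>) ^ k * nint k 1 t (\<lambda>_. 0)
      (\<lambda>tau. F_k HE v rhoE k tau * vcomp (\<lambda>a b. 0) (msmult (1/2) sigma_z) k tau rhoS a a))
      = (\<lambda>k. if k = 0 then rhoS a a else 0)"
  proof (intro ext)
    fix k :: nat
    show "(- \<i>) ^ k * nint k 1 t (\<lambda>_. 0)
      (\<lambda>tau. F_k HE v rhoE k tau * vcomp (\<lambda>a b. 0) (msmult (1/2) sigma_z) k tau rhoS a a)
      = (if k = 0 then rhoS a a else 0)"
    proof (cases k)
      case 0
      then show ?thesis by simp
    next
      case (Suc k')
      then show ?thesis unfolding vcomp_entry by (simp add: nint_zero)
    qed
  qed
  have "mtr (mmult (mmult (U_E (Hb v HE a) t) rhoE) (U_E (Hb v HE a) (-t))) = 1"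
    using mtr_Uop[of "Hb v HE a" t rhoE] tr1 unfolding Uop_def by simp
  then show ?thesis unfolding f using sums_single[of 0 "\<lambda>_. rhoS a a"] by simp
qed

theorem mainTheorem7:
  fixes HS VS rhoS :: "bool cmat"
    and HE rhoE :: "'e::finite cmat"
    and v :: "'e \<Rightarrow> real"
    and t :: real
  assumes HS: "HS = (\<lambda>a b. 0)"
    and VS: "VS = msmult (1/2) sigma_z"
    and rhoS: "density_matrix rhoS"
    and HE: "hermitian HE"
    and rhoE: "density_matrix rhoE"
    and t: "0 \<le> t"
  shows "(\<forall>a b. (\<lambda>k. (- \<i>) ^ k *
              nint k 1 t (\<lambda>_. 0) (\<lambda>tau. F_k HE v rhoE k tau * vcomp HS VS k tau rhoS a b))
            sums (reduced_interaction_state HS VS (diag_op v) HE rhoS rhoE t a b))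
    \<and> (\<forall>k tau. 1 \<le> k \<longrightarrow> time_ordered k tau \<longrightarrow>
          F_k HE v rhoE k tau =
            (\<Sum>phi\<in>ktuples k (Omega_VV v).
               complex_of_real (\<Prod>l\<in>{1..k}. phi l) * f_k HE v rhoE k phi tau))
    \<and> (\<forall>k l phi tau. 2 \<le> k \<longrightarrow> l \<in> {1..k} \<longrightarrow> time_ordered k tau \<longrightarrow>
          (\<Sum>x\<in>Omega_VV v. f_k HE v rhoE k (phi(l := x)) tau)
            = f_k HE v rhoE (k - 1) (skip_idx l phi) (skip_idx l tau))"
proof (intro conjI allI impI)
  have tr1: "mtr rhoE = 1" using rhoE unfolding density_matrix_def mtr_def by blast
  fix a b
  show "(\<lambda>k. (- \<i>) ^ k *
              nint k 1 t (\<lambda>_. 0) (\<lambda>tau. F_k HE v rhoE k tau * vcomp HS VS k tau rhoS a b))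
            sums (reduced_interaction_state HS VS (diag_op v) HE rhoS rhoE t a b)"
    unfolding HS VS reduced_eq
  proof (cases "a = b")
    case True
    then show "(\<lambda>k. (- \<i>) ^ k * nint k 1 t (\<lambda>_. 0)
        (\<lambda>tau. F_k HE v rhoE k tau * vcomp (\<lambda>a b. 0) (msmult (1 / 2) sigma_z) k tau rhoS a b))
      sums (rhoS a b * mtr (mmult (mmult (U_E (Hb v HE a) t) rhoE) (U_E (Hb v HE b) (- t))))"
      using part1_diag[OF tr1] by simp
  next
    case False
    then show "(\<lambda>k. (- \<i>) ^ k * nint k 1 t (\<lambda>_. 0)
        (\<lambda>tau. F_k HE v rhoE k tau * vcomp (\<lambda>a b. 0) (msmult (1 / 2) sigma_z) k tau rhoS a b))
      sums (rhoS a b * mtr (mmult (mmult (U_E (Hb v HE a) t) rhoE) (U_E (Hb v HE b) (- t))))"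
      by (rule part1_off[OF HE tr1 t])
  qed
next
  fix k :: nat and tau
  assume "1 \<le> k"
  then show "F_k HE v rhoE k tau =
            (\<Sum>phi\<in>ktuples k (Omega_VV v).
               complex_of_real (\<Prod>l\<in>{1..k}. phi l) * f_k HE v rhoE k phi tau)"
    by (rule part2)
next
  fix k l :: nat and phi tau
  assume "2 \<le> k" "l \<in> {1..k}"
  then show "(\<Sum>x\<in>Omega_VV v. f_k HE v rhoE k (phi(l := x)) tau)
            = f_k HE v rhoE (k - 1) (skip_idx l phi) (skip_idx l tau)"
    by (rule part3[OF HE])
qed

end
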